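(* In the K-AVG algorithm (described in the context), fix an outer iteration $n$ and write $\gamma=\gamma_n$, $B=B_n$. Suppose that for some $0<\delta<1$, $$1\ \ge\ \frac{L^2\gamma^2(K+1)(K-2)}{2}+L\gamma K\qquad\text{and}\qquad 1-\delta\ \ge\ L^2\gamma^2 .$$ Then, conditionally on $\widetilde w_n$, $$\mathbb{E}\big[F(\widetilde w_{n+1})\,\big|\,\widetilde w_n\big]-F(\widetilde w_n)\ \le\ -\frac{(K-1+\delta)\gamma}{2}\big\|\nabla F(\widetilde w_n)\big\|_2^2+\frac{L\gamma^2KM}{2B}\Big(\frac KP+\frac{L(2K-1)(K-1)\gamma}{6}\Big).$$
   Context: Let $F:\mathbb{R}^d\to\mathbb{R}$ be continuously differentiable with $L$-Lipschitz gradient ($L>0$): $\|\nabla F(w)-\nabla F(w')\|_2\le L\|w-w'\|_2$ for all $w,w'$. Let $\xi$ be a random variable and $(w,\xi)\mapsto\nabla F(w;\xi)\in\mathbb{R}^d$ a stochastic gradient satisfying, for every fixed $w$, $\mathbb{E}_\xi\nabla F(w;\xi)=\nabla F(w)$ and $\mathbb{E}_\xi\|\nabla F(w;\xi)\|_2^2-\|\mathbb{E}_\xi\nabla F(w;\xi)\|_2^2\le M$ for a constant $M\ge0$. K-AVG algorithm with $P\ge1$ processors, delay $K\ge1$, stepsizes $\gamma_n>0$ and batch sizes $B_n\ge1$: start from a deterministic $\widetilde w_1\in\mathbb{R}^d$. For $n=1,2,\dots$: each processor $j=1,\dots,P$ sets $w^j_{n,0}=\widetilde w_n$ and for $k=1,\dots,K$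 updates $w^j_{n,k}=w^j_{n,k-1}-\frac{\gamma_n}{B_n}\sum_{s=1}^{B_n}\nabla F(w^j_{n,k-1};\xi^j_{n,k,s})$; then $\widetilde w_{n+1}=\frac1P\sum_{j=1}^P w^j_{n,K}$. All samples $\xi^j_{n,k,s}$ (over all $n,j,k,s$) are i.i.d. copies of $\xi$. It is assumed that there is a scalar $F^*$ with $F\ge F^*$ on an open set containing all iterates (in particular $F(\widetilde w_n)\ge F^*$ for all $n$). $\mathbb{E}$ denotes total expectation over all samples. *)

theory Defs
  imports "HOL-Probability.Probability"
begin

text \<open>Samples are indexed by (j,k,s) with j < P (processor), 1 <= k <= K (local step),
  s < B (mini-batch element).  G v xi is the stochastic gradient at v for sample xi.\<close>

fun kavg_local ::
  "('a::real_vector \<Rightarrow> 'b \<Rightarrow> 'a) \<Rightarrow> real \<Rightarrow> nat \<Rightarrow> 'a \<Rightarrow> (nat \<times> nat \<times> nat \<Rightarrow> 'b) \<Rightarrow> nat \<Rightarrow> nat \<Rightarrow> 'a"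
where
  "kavg_local G \<gamma> B w x j 0 = w"
| "kavg_local G \<gamma> B w x j (Suc k) =
     kavg_local G \<gamma> B w x j k
     - (\<gamma> / real B) *\<^sub>R (\<Sum>s<B. G (kavg_local G \<gamma> B w x j k) (x (j, Suc k, s)))"

definition kavg_step ::
  "('a::real_vector \<Rightarrow> 'b \<Rightarrow> 'a) \<Rightarrow> real \<Rightarrow> nat \<Rightarrow> nat \<Rightarrow> nat \<Rightarrow> 'a \<Rightarrow> (nat \<times> nat \<times> nat \<Rightarrow> 'b) \<Rightarrow> 'a"
where
  "kavg_step G \<gamma> B K P w x = (1 / real P) *\<^sub>R (\<Sum>j<P. kavg_local G \<gamma> B w x j K)"

definition kavg_index :: "nat \<Rightarrow> nat \<Rightarrow> nat \<Rightarrow> (nat \<times> nat \<times> nat) set" where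
  "kavg_index P K B = {..<P} \<times> {1..K} \<times> {..<B}"

end

theory Submission
  imports Defs
begin


definition dep :: "'i set \<Rightarrow> (('i \<Rightarrow> 'b) \<Rightarrow> 'c) \<Rightarrow> bool" where
  "dep J f \<longleftrightarrow> (\<forall>x y. (\<forall>i\<in>J. x i = y i) \<longrightarrow> f x = f y)"

lemma dep_mono: "dep J f \<Longrightarrow> J \<subseteq> J' \<Longrightarrow> dep J' f"
  unfolding dep_def by blast

lemma dep_restrict: "dep J f \<Longrightarrow> f (restrict x J) = f x"
  unfolding dep_def by auto

lemma dep_merge1: assumes "dep A f" shows "f (merge A J (x,y)) = f x"
proof -
  have "\<forall>i\<in>A. merge A J (x,y) i = x i" by (auto simp: merge_def)
  then show ?thesis using assms unfolding dep_def by blast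
qed

lemma dep_merge2: assumes "dep J f" "A \<inter> J = {}" shows "f (merge A J (x,y)) = f y"
proof -
  have "\<forall>i\<in>J. merge A J (x,y) i = y i" using assms(2) by (auto simp: merge_def)
  then show ?thesis using assms(1) unfolding dep_def by blast
qed

definition sqint :: "'x measure \<Rightarrow> ('x \<Rightarrow> 'c::real_normed_vector) \<Rightarrow> bool" where
  "sqint M f \<longleftrightarrow> f \<in> borel_measurable M \<and> integrable M (\<lambda>x. (norm (f x))\<^sup>2)"

lemma norm_sq_sum_le:
  fixes f :: "nat \<Rightarrow> 'c::real_normed_vector"
  shows "(norm (\<Sum>i<n. f i))\<^sup>2 \<le> real n * (\<Sum>i<n. (norm (f i))\<^sup>2)"
proof -
  have "(norm (\<Sum>i<n. f i))\<^sup>2 \<le> (\<Sum>i<n. norm (f i))\<^sup>2"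
    by (intro power_mono norm_sum) simp
  also have "\<dots> = (\<Sum>i<n. 1 * norm (f i))\<^sup>2" by simp
  also have "\<dots> \<le> (\<Sum>i<n. 1\<^sup>2) * (\<Sum>i<n. (norm (f i))\<^sup>2)"
    by (rule Cauchy_Schwarz_ineq_sum)
  finally show ?thesis by simp
qed

lemma norm_sq_add_le: "(norm (a + b :: 'c::real_normed_vector))\<^sup>2 \<le> 2 * (norm a)\<^sup>2 + 2 * (norm b)\<^sup>2"
proof -
  have "(norm (a + b))\<^sup>2 \<le> (norm a + norm b)\<^sup>2"
    by (intro power_mono norm_triangle_ineq) simp
  also have "\<dots> \<le> 2 * (norm a)\<^sup>2 + 2 * (norm b)\<^sup>2"
    using zero_le_power2[of "norm a - norm b"] unfolding power2_sum power2_diff by linarith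
  finally show ?thesis .
qed

context
  fixes M :: "'x measure"
  assumes PM: "prob_space M"
begin

lemma ic: "integrable M (\<lambda>x. c::'c::{banach, second_countable_topology})"
  using finite_measure.integrable_const[OF prob_space.finite_measure[OF PM]] .

lemma sqint_integrable:
  fixes f :: "_ \<Rightarrow> 'c::{banach, second_countable_topology}"
  assumes "sqint M f" shows "integrable M f"
proof (rule Bochner_Integration.integrable_bound[where f="\<lambda>x. 1 + (norm (f x))\<^sup>2"])
  show "integrable M (\<lambda>x. 1 + (norm (f x))\<^sup>2)" using assms ic unfolding sqint_def by (intro Bochner_Integration.integrable_add) auto
  show "f \<in> borel_measurable M" using assms unfolding sqint_def by simp
  have "\<And>t::real. t \<le> 1 + t\<^sup>2"
  proof -
    fix t :: real
    have "2 * t \<le> t\<^sup>2 + 1" using zero_le_power2[of "t - 1"] unfolding power2_diff by simp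
    moreover have "0 \<le> t\<^sup>2" by simp
    ultimately show "t \<le> 1 + t\<^sup>2" by linarith
  qed
  then show "AE x in M. norm (f x) \<le> norm (1 + (norm (f x))\<^sup>2)" by simp
qed

lemma sqint_add:
  fixes f g :: "_ \<Rightarrow> 'c::{banach, second_countable_topology}"
  assumes "sqint M f" "sqint M g" shows "sqint M (\<lambda>x. f x + g x)"
  unfolding sqint_def
proof
  show m: "(\<lambda>x. f x + g x) \<in> borel_measurable M" using assms unfolding sqint_def by (simp add: borel_measurable_add)
  show "integrable M (\<lambda>x. (norm (f x + g x))\<^sup>2)"
  proof (rule Bochner_Integration.integrable_bound[where f="\<lambda>x. 2 * (norm (f x))\<^sup>2 + 2 * (norm (g x))\<^sup>2"])
    show "integrable M (\<lambda>x. 2 * (norm (f x))\<^sup>2 + 2 * (norm (g x))\<^sup>2)" using assms unfolding sqint_def by simp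
    show "(\<lambda>x. (norm (f x + g x))\<^sup>2) \<in> borel_measurable M" using m by simp
    show "AE x in M. norm ((norm (f x + g x))\<^sup>2) \<le> norm (2 * (norm (f x))\<^sup>2 + 2 * (norm (g x))\<^sup>2)"
      using norm_sq_add_le[of "f x" "g x" for x] by (simp add: add_nonneg_nonneg)
  qed
qed

lemma sqint_scaleR:
  fixes f :: "_ \<Rightarrow> 'c::{banach, second_countable_topology}"
  assumes "sqint M f" shows "sqint M (\<lambda>x. c *\<^sub>R f x)"
  using assms unfolding sqint_def by (simp add: power_mult_distrib borel_measurable_scaleR)

lemma sqint_uminus:
  fixes f :: "_ \<Rightarrow> 'c::{banach, second_countable_topology}"
  assumes "sqint M f" shows "sqint M (\<lambda>x. - f x)"
  using assms unfolding sqint_def by simp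

lemma sqint_diff:
  fixes f g :: "_ \<Rightarrow> 'c::{banach, second_countable_topology}"
  assumes "sqint M f" "sqint M g" shows "sqint M (\<lambda>x. f x - g x)"
  using sqint_add[OF assms(1) sqint_uminus[OF assms(2)]] by simp

lemma sqint_const: "sqint M (\<lambda>x. c :: 'c::{banach, second_countable_topology})"
  unfolding sqint_def using ic by simp

lemma sqint_sum:
  fixes f :: "_ \<Rightarrow> _ \<Rightarrow> 'c::{banach, second_countable_topology}"
  assumes "\<And>i. i \<in> A \<Longrightarrow> sqint M (f i)" shows "sqint M (\<lambda>x. \<Sum>i\<in>A. f i x)"
  using assms
proof (induction A rule: infinite_finite_induct)
  case (insert a A) then show ?case by (simp add: sqint_add)
qed (simp_all add: sqint_const)

lemma sqint_inner:
  fixes f g :: "_ \<Rightarrow> 'c::euclidean_space"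
  assumes "sqint M f" "sqint M g" shows "integrable M (\<lambda>x. f x \<bullet> g x)"
proof (rule Bochner_Integration.integrable_bound[where f="\<lambda>x. (norm (f x))\<^sup>2 + (norm (g x))\<^sup>2"])
  show "integrable M (\<lambda>x. (norm (f x))\<^sup>2 + (norm (g x))\<^sup>2)" using assms unfolding sqint_def by simp
  show "(\<lambda>x. f x \<bullet> g x) \<in> borel_measurable M" using assms unfolding sqint_def by (simp add: borel_measurable_inner)
  have "\<And>x. \<bar>f x \<bullet> g x\<bar> \<le> (norm (f x))\<^sup>2 + (norm (g x))\<^sup>2"
  proof -
    fix x
    have "\<bar>f x \<bullet> g x\<bar> \<le> norm (f x) * norm (g x)" by (rule Cauchy_Schwarz_ineq2)
    also have "\<dots> \<le> (norm (f x))\<^sup>2 + (norm (g x))\<^sup>2"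
      using zero_le_power2[of "norm (f x) - norm (g x)"] mult_nonneg_nonneg[OF norm_ge_zero norm_ge_zero, of "f x" "g x"]
      unfolding power2_diff by linarith
    finally show "\<bar>f x \<bullet> g x\<bar> \<le> (norm (f x))\<^sup>2 + (norm (g x))\<^sup>2" .
  qed
  then show "AE x in M. norm (f x \<bullet> g x) \<le> norm ((norm (f x))\<^sup>2 + (norm (g x))\<^sup>2)" by simp
qed

lemma sqint_sq_integrable: "sqint M f \<Longrightarrow> integrable M (\<lambda>x. (norm (f x))\<^sup>2)"
  unfolding sqint_def by simp

lemma sqint_meas: "sqint M f \<Longrightarrow> f \<in> borel_measurable M"
  unfolding sqint_def by simp

end

context
  fixes D :: "'b measure"
  assumes PD: "prob_space D"
begin

lemma PiM_prob: "prob_space (PiM J (\<lambda>_. D))"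
  by (rule prob_space_PiM) (simp add: PD)

lemma PiM_space_ne: "space (PiM J (\<lambda>_. D)) \<noteq> {}"
  using prob_space.not_empty[OF PiM_prob] by blast

lemma pps: "product_prob_space (\<lambda>_. D)"
  unfolding product_prob_space_def product_prob_space_axioms_def product_sigma_finite_def
  using PD prob_space_imp_sigma_finite by auto

lemma dep_meas:
  assumes "finite I" "J \<subseteq> I" "f \<in> borel_measurable (PiM I (\<lambda>_. D))" "dep J f"
  shows "f \<in> borel_measurable (PiM J (\<lambda>_. D))"
proof -
  interpret product_prob_space "\<lambda>_. D" by (rule pps)
  obtain x0 where x0: "x0 \<in> space (PiM (I - J) (\<lambda>_. D))" using PiM_space_ne by blast
  have IJ: "(I - J) \<union> J = I" using assms by auto
  have m: "(\<lambda>y. merge (I - J) J (x0, y)) \<in> measurable (PiM J (\<lambda>_. D)) (PiM I (\<lambda>_. D))"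
    using measurable_comp[OF measurable_Pair1'[OF x0] measurable_merge[of "I-J" J "\<lambda>_. D"]]
    unfolding IJ comp_def .
  have "(\<lambda>y. f (merge (I - J) J (x0, y))) \<in> borel_measurable (PiM J (\<lambda>_. D))"
    using measurable_comp[OF m assms(3)] unfolding comp_def .
  moreover have "\<And>y. f (merge (I - J) J (x0, y)) = f y"
    using dep_merge2[OF assms(4)] by blast
  ultimately show ?thesis by simp
qed

lemma restr_distr:
  assumes "finite I" "J \<subseteq> I"
  shows "distr (PiM I (\<lambda>_. D)) (PiM J (\<lambda>_. D)) (\<lambda>x. restrict x J) = PiM J (\<lambda>_. D)"
proof -
  interpret product_prob_space "\<lambda>_. D" I by (rule pps)
  show ?thesis using assms by (intro distr_PiM_restrict_finite) (auto dest: finite_subset)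
qed

lemma dep_integrable:
  fixes f :: "_ \<Rightarrow> 'c::{banach, second_countable_topology}"
  assumes "finite I" "J \<subseteq> I" "f \<in> borel_measurable (PiM I (\<lambda>_. D))" "dep J f"
  shows "integrable (PiM I (\<lambda>_. D)) f \<longleftrightarrow> integrable (PiM J (\<lambda>_. D)) f"
proof -
  have fm: "f \<in> borel_measurable (PiM J (\<lambda>_. D))" using dep_meas[OF assms] .
  have "integrable (PiM J (\<lambda>_. D)) f \<longleftrightarrow> integrable (distr (PiM I (\<lambda>_. D)) (PiM J (\<lambda>_. D)) (\<lambda>x. restrict x J)) f"
    using restr_distr[OF assms(1,2)] by simp
  also have "\<dots> \<longleftrightarrow> integrable (PiM I (\<lambda>_. D)) (\<lambda>x. f (restrict x J))"
    by (rule integrable_distr_eq[OF measurable_restrict_subset[OF assms(2)] fm])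
  finally show ?thesis using dep_restrict[OF assms(4)] by simp
qed

lemma dep_integral:
  fixes f :: "_ \<Rightarrow> 'c::{banach, second_countable_topology}"
  assumes "finite I" "J \<subseteq> I" "f \<in> borel_measurable (PiM I (\<lambda>_. D))" "dep J f"
  shows "integral\<^sup>L (PiM I (\<lambda>_. D)) f = integral\<^sup>L (PiM J (\<lambda>_. D)) f"
proof -
  have fm: "f \<in> borel_measurable (PiM J (\<lambda>_. D))" using dep_meas[OF assms] .
  have "integral\<^sup>L (PiM J (\<lambda>_. D)) f = integral\<^sup>L (distr (PiM I (\<lambda>_. D)) (PiM J (\<lambda>_. D)) (\<lambda>x. restrict x J)) f"
    using restr_distr[OF assms(1,2)] by simp
  also have "\<dots> = integral\<^sup>L (PiM I (\<lambda>_. D)) (\<lambda>x. f (restrict x J))"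
    by (rule integral_distr[OF measurable_restrict_subset[OF assms(2)] fm])
  finally show ?thesis using dep_restrict[OF assms(4)] by simp
qed

lemma dep_nn_integral:
  assumes "finite I" "J \<subseteq> I" "f \<in> borel_measurable (PiM I (\<lambda>_. D))" "dep J f"
  shows "integral\<^sup>N (PiM I (\<lambda>_. D)) f = integral\<^sup>N (PiM J (\<lambda>_. D)) f"
proof -
  have fm: "f \<in> borel_measurable (PiM J (\<lambda>_. D))" using dep_meas[OF assms] .
  have "integral\<^sup>N (PiM J (\<lambda>_. D)) f = integral\<^sup>N (distr (PiM I (\<lambda>_. D)) (PiM J (\<lambda>_. D)) (\<lambda>x. restrict x J)) f"
    using restr_distr[OF assms(1,2)] by simp
  also have "\<dots> = integral\<^sup>N (PiM I (\<lambda>_. D)) (\<lambda>x. f (restrict x J))"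
    by (rule nn_integral_distr[OF measurable_restrict_subset[OF assms(2)]]) (simp add: restr_distr[OF assms(1,2)] fm)
  finally show ?thesis using dep_restrict[OF assms(4)] by simp
qed

lemma comp_integrable:
  fixes f :: "_ \<Rightarrow> 'c::{banach, second_countable_topology}"
  assumes "i \<in> I" "f \<in> borel_measurable D"
  shows "integrable (PiM I (\<lambda>_. D)) (\<lambda>x. f (x i)) \<longleftrightarrow> integrable D f"
    and "(\<integral>x. f (x i) \<partial>PiM I (\<lambda>_. D)) = integral\<^sup>L D f"
proof -
  have d: "distr (PiM I (\<lambda>_. D)) D (\<lambda>x. x i) = D"
    using distr_PiM_component[of I "\<lambda>_. D" i] PD assms(1) by simp
  have m: "(\<lambda>x. x i) \<in> measurable (PiM I (\<lambda>_. D)) D"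
    using measurable_component_singleton[OF assms(1), of "\<lambda>_. D"] by simp
  show "integrable (PiM I (\<lambda>_. D)) (\<lambda>x. f (x i)) \<longleftrightarrow> integrable D f"
    using integrable_distr_eq[OF m assms(2)] d by simp
  show "(\<integral>x. f (x i) \<partial>PiM I (\<lambda>_. D)) = integral\<^sup>L D f"
    using integral_distr[OF m assms(2)] d by simp
qed
lemma fold_L:
  fixes f :: "_ \<Rightarrow> 'c::{banach, second_countable_topology}"
  assumes "finite I" "J \<subseteq> I" "integrable (PiM I (\<lambda>_. D)) f"
  shows "integral\<^sup>L (PiM I (\<lambda>_. D)) f = (\<integral>x. (\<integral>y. f (merge (I-J) J (x, y)) \<partial>PiM J (\<lambda>_. D)) \<partial>PiM (I-J) (\<lambda>_. D))"
proof -
  interpret product_prob_space "\<lambda>_. D" I by (rule pps)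
  have IJ: "(I - J) \<union> J = I" using assms by auto
  show ?thesis using product_integral_fold[of "I-J" J f] assms IJ by (auto dest: finite_subset)
qed

lemma fold_N:
  assumes "finite I" "J \<subseteq> I" "f \<in> borel_measurable (PiM I (\<lambda>_. D))"
  shows "integral\<^sup>N (PiM I (\<lambda>_. D)) f = (\<integral>\<^sup>+x. (\<integral>\<^sup>+y. f (merge (I-J) J (x, y)) \<partial>PiM J (\<lambda>_. D)) \<partial>PiM (I-J) (\<lambda>_. D))"
proof -
  interpret product_prob_space "\<lambda>_. D" I by (rule pps)
  have IJ: "(I - J) \<union> J = I" using assms by auto
  show ?thesis using product_nn_integral_fold[of "I-J" J f] assms IJ by (auto dest: finite_subset)
qed

lemma indep_inner:
  fixes f g :: "_ \<Rightarrow> 'c::euclidean_space"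
  assumes I: "finite I" "J1 \<subseteq> I" "J2 \<subseteq> I" "J1 \<inter> J2 = {}"
    and fm: "f \<in> borel_measurable (PiM I (\<lambda>_. D))" and gm: "g \<in> borel_measurable (PiM I (\<lambda>_. D))"
    and df: "dep J1 f" and dg: "dep J2 g"
    and fi: "integrable (PiM I (\<lambda>_. D)) f" and gi: "integrable (PiM I (\<lambda>_. D)) g"
    and fgi: "integrable (PiM I (\<lambda>_. D)) (\<lambda>x. f x \<bullet> g x)"
  shows "(\<integral>x. f x \<bullet> g x \<partial>PiM I (\<lambda>_. D)) = integral\<^sup>L (PiM I (\<lambda>_. D)) f \<bullet> integral\<^sup>L (PiM I (\<lambda>_. D)) g"
proof -
  let ?A = "I - J2"
  have dfA: "dep ?A f" using I by (intro dep_mono[OF df]) auto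
  have A: "?A \<subseteq> I" "?A \<inter> J2 = {}" by auto
  have giJ: "integrable (PiM J2 (\<lambda>_. D)) g" using dep_integrable[OF I(1,3) gm dg] gi by simp
  have fiA: "integrable (PiM ?A (\<lambda>_. D)) f" using dep_integrable[OF I(1) A(1) fm dfA] fi by simp
  have "(\<integral>x. f x \<bullet> g x \<partial>PiM I (\<lambda>_. D)) =
     (\<integral>x. (\<integral>y. f (merge ?A J2 (x, y)) \<bullet> g (merge ?A J2 (x, y)) \<partial>PiM J2 (\<lambda>_. D)) \<partial>PiM ?A (\<lambda>_. D))"
    using fold_L[OF I(1,3) fgi] .
  also have "\<dots> = (\<integral>x. (\<integral>y. f x \<bullet> g y \<partial>PiM J2 (\<lambda>_. D)) \<partial>PiM ?A (\<lambda>_. D))"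
    using dep_merge1[OF dfA] dep_merge2[OF dg A(2)] by simp
  also have "\<dots> = (\<integral>x. f x \<bullet> integral\<^sup>L (PiM J2 (\<lambda>_. D)) g \<partial>PiM ?A (\<lambda>_. D))"
    using giJ by simp
  also have "\<dots> = integral\<^sup>L (PiM ?A (\<lambda>_. D)) f \<bullet> integral\<^sup>L (PiM J2 (\<lambda>_. D)) g"
    using fiA by simp
  also have "\<dots> = integral\<^sup>L (PiM I (\<lambda>_. D)) f \<bullet> integral\<^sup>L (PiM I (\<lambda>_. D)) g"
    using dep_integral[OF I(1) A(1) fm dfA] dep_integral[OF I(1,3) gm dg] by simp
  finally show ?thesis .
qed

lemma cond_L:
  fixes \<Phi> :: "'v \<Rightarrow> _ \<Rightarrow> 'c::{banach, second_countable_topology}"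
  assumes I: "finite I" "T \<subseteq> I"
    and dV: "dep (I - T) V" and d\<Phi>: "\<And>v. dep T (\<Phi> v)"
    and \<psi>: "\<And>v. (\<integral>y. \<Phi> v y \<partial>PiM T (\<lambda>_. D)) = \<psi> v"
    and i1: "integrable (PiM I (\<lambda>_. D)) (\<lambda>x. \<Phi> (V x) x)"
    and i2: "integrable (PiM I (\<lambda>_. D)) (\<lambda>x. \<psi> (V x))"
  shows "(\<integral>x. \<Phi> (V x) x \<partial>PiM I (\<lambda>_. D)) = (\<integral>x. \<psi> (V x) \<partial>PiM I (\<lambda>_. D))"
proof -
  let ?A = "I - T"
  have A: "?A \<subseteq> I" "?A \<inter> T = {}" by auto
  have d2: "dep ?A (\<lambda>x. \<psi> (V x))" using dV unfolding dep_def by metis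
  have "(\<integral>x. \<Phi> (V x) x \<partial>PiM I (\<lambda>_. D)) =
     (\<integral>x. (\<integral>y. \<Phi> (V (merge ?A T (x, y))) (merge ?A T (x, y)) \<partial>PiM T (\<lambda>_. D)) \<partial>PiM ?A (\<lambda>_. D))"
    using fold_L[OF I i1] .
  also have "\<dots> = (\<integral>x. (\<integral>y. \<Phi> (V x) y \<partial>PiM T (\<lambda>_. D)) \<partial>PiM ?A (\<lambda>_. D))"
    using dep_merge1[OF dV] dep_merge2[OF d\<Phi> A(2)] by simp
  also have "\<dots> = (\<integral>x. \<psi> (V x) \<partial>PiM ?A (\<lambda>_. D))" using \<psi> by simp
  also have "\<dots> = (\<integral>x. \<psi> (V x) \<partial>PiM I (\<lambda>_. D))"
    using dep_integral[OF I(1) A(1) _ d2] i2 by simp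
  finally show ?thesis .
qed

lemma cond_N:
  assumes I: "finite I" "T \<subseteq> I"
    and dV: "dep (I - T) V" and d\<Phi>: "\<And>v. dep T (\<Phi> v)"
    and \<psi>: "\<And>v. (\<integral>\<^sup>+y. \<Phi> v y \<partial>PiM T (\<lambda>_. D)) \<le> \<psi> v"
    and i1: "(\<lambda>x. \<Phi> (V x) x) \<in> borel_measurable (PiM I (\<lambda>_. D))"
    and i2: "(\<lambda>x. \<psi> (V x)) \<in> borel_measurable (PiM I (\<lambda>_. D))"
  shows "(\<integral>\<^sup>+x. \<Phi> (V x) x \<partial>PiM I (\<lambda>_. D)) \<le> (\<integral>\<^sup>+x. \<psi> (V x) \<partial>PiM I (\<lambda>_. D))"
proof -
  let ?A = "I - T"
  have A: "?A \<subseteq> I" "?A \<inter> T = {}" by auto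
  have d2: "dep ?A (\<lambda>x. \<psi> (V x))" using dV unfolding dep_def by metis
  have "(\<integral>\<^sup>+x. \<Phi> (V x) x \<partial>PiM I (\<lambda>_. D)) =
     (\<integral>\<^sup>+x. (\<integral>\<^sup>+y. \<Phi> (V (merge ?A T (x, y))) (merge ?A T (x, y)) \<partial>PiM T (\<lambda>_. D)) \<partial>PiM ?A (\<lambda>_. D))"
    using fold_N[OF I i1] .
  also have "\<dots> = (\<integral>\<^sup>+x. (\<integral>\<^sup>+y. \<Phi> (V x) y \<partial>PiM T (\<lambda>_. D)) \<partial>PiM ?A (\<lambda>_. D))"
    using dep_merge1[OF dV] dep_merge2[OF d\<Phi> A(2)] by simp
  also have "\<dots> \<le> (\<integral>\<^sup>+x. \<psi> (V x) \<partial>PiM ?A (\<lambda>_. D))" using \<psi> by (intro nn_integral_mono) simp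
  also have "\<dots> = (\<integral>\<^sup>+x. \<psi> (V x) \<partial>PiM I (\<lambda>_. D))"
    using dep_nn_integral[OF I(1) A(1) i2 d2] by simp
  finally show ?thesis .
qed

lemma batch:
  fixes g :: "'b \<Rightarrow> 'a::euclidean_space" and j k n :: nat
  assumes gm: "g \<in> borel_measurable D" and gi: "integrable D g"
    and g2: "integrable D (\<lambda>\<xi>. (norm (g \<xi>))\<^sup>2)" and n: "n \<ge> 1"
  defines "T \<equiv> {j} \<times> {k} \<times> {..<n}"
    and "Y \<equiv> \<lambda>y. (1 / real n) *\<^sub>R (\<Sum>s<n. g (y (j,k,s)))"
  shows "integrable (PiM T (\<lambda>_. D)) Y" "integral\<^sup>L (PiM T (\<lambda>_. D)) Y = integral\<^sup>L D g"
    "integrable (PiM T (\<lambda>_. D)) (\<lambda>y. (norm (Y y))\<^sup>2)"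
    "(\<integral>y. (norm (Y y))\<^sup>2 \<partial>PiM T (\<lambda>_. D)) =
       (norm (integral\<^sup>L D g))\<^sup>2 + ((\<integral>\<xi>. (norm (g \<xi>))\<^sup>2 \<partial>D) - (norm (integral\<^sup>L D g))\<^sup>2) / real n"
proof -
  let ?M = "PiM T (\<lambda>_. D)"
  have PM: "prob_space ?M" by (rule PiM_prob)
  have fT: "finite T" unfolding T_def by simp
  have inT: "s < n \<Longrightarrow> (j,k,s) \<in> T" for s unfolding T_def by simp
  define X where "X = (\<lambda>(s::nat) y. g (y (j,k,s)))"
  have Xm: "s < n \<Longrightarrow> X s \<in> borel_measurable ?M" for s
    unfolding X_def using measurable_compose[OF measurable_component_singleton[OF inT] gm] by simp
  have sX: "s < n \<Longrightarrow> sqint ?M (X s)" for s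
    unfolding sqint_def using Xm[of s] comp_integrable(1)[OF inT[of s], of "\<lambda>\<xi>. (norm (g \<xi>))\<^sup>2"] gm g2
    by (auto simp: X_def)
  have EX: "s < n \<Longrightarrow> integral\<^sup>L ?M (X s) = integral\<^sup>L D g" for s
    unfolding X_def using comp_integrable(2)[OF inT[of s] gm] by simp
  have iX: "s < n \<Longrightarrow> integrable ?M (X s)" for s using sqint_integrable[OF PM sX] .
  have iXX: "s < n \<Longrightarrow> s' < n \<Longrightarrow> integrable ?M (\<lambda>y. X s y \<bullet> X s' y)" for s s'
    using sqint_inner[OF PM sX sX] .
  define a where "a = (\<integral>\<xi>. (norm (g \<xi>))\<^sup>2 \<partial>D)"
  define b where "b = (norm (integral\<^sup>L D g))\<^sup>2"
  have EXX: "(\<integral>y. X s y \<bullet> X s' y \<partial>?M) = b + (if s = s' then a - b else 0)" if s: "s < n" "s' < n" for s s'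
  proof (cases "s = s'")
    case True
    have "(\<integral>y. X s y \<bullet> X s y \<partial>?M) = (\<integral>\<xi>. g \<xi> \<bullet> g \<xi> \<partial>D)"
      unfolding X_def by (rule comp_integrable(2)[OF inT[OF s(1)]]) (simp add: gm borel_measurable_inner)
    also have "\<dots> = a" unfolding a_def by (simp add: power2_norm_eq_inner)
    finally show ?thesis using True by simp
  next
    case False
    have d1: "dep {(j,k,s)} (X s)" and d2: "dep {(j,k,s')} (X s')" unfolding dep_def X_def by auto
    have "(\<integral>y. X s y \<bullet> X s' y \<partial>?M) = integral\<^sup>L ?M (X s) \<bullet> integral\<^sup>L ?M (X s')"
      by (rule indep_inner[OF fT _ _ _ Xm[OF s(1)] Xm[OF s(2)] d1 d2 iX[OF s(1)] iX[OF s(2)] iXX[OF s]])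
        (use inT s False in auto)
    also have "\<dots> = b" unfolding b_def EX[OF s(1)] EX[OF s(2)] by (simp add: power2_norm_eq_inner)
    finally show ?thesis using False by simp
  qed
  have YX: "Y = (\<lambda>y. (1 / real n) *\<^sub>R (\<Sum>s<n. X s y))" unfolding Y_def X_def by simp
  have Ysq: "(norm (Y y))\<^sup>2 = (1 / real n)\<^sup>2 * (\<Sum>s<n. \<Sum>s'<n. X s y \<bullet> X s' y)" for y
  proof -
    have "(norm (Y y))\<^sup>2 = (1 / real n)\<^sup>2 * ((\<Sum>s<n. X s y) \<bullet> (\<Sum>s'<n. X s' y))"
      unfolding YX power2_norm_eq_inner by (simp add: power2_eq_square)
    also have "\<dots> = (1 / real n)\<^sup>2 * (\<Sum>s<n. \<Sum>s'<n. X s y \<bullet> X s' y)"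
      by (simp only: inner_sum_left inner_sum_right, subst sum.swap, rule refl)
    finally show ?thesis .
  qed
  have iY: "integrable ?M (\<lambda>y. (\<Sum>s<n. \<Sum>s'<n. X s y \<bullet> X s' y))"
    using iXX by (intro Bochner_Integration.integrable_sum) auto
  show "integrable ?M (\<lambda>y. (norm (Y y))\<^sup>2)" unfolding Ysq using iY by simp
  have "(\<integral>y. (norm (Y y))\<^sup>2 \<partial>?M) = (1 / real n)\<^sup>2 * (\<Sum>s<n. \<Sum>s'<n. (\<integral>y. X s y \<bullet> X s' y \<partial>?M))"
  proof -
    have "(\<integral>y. (\<Sum>s<n. \<Sum>s'<n. X s y \<bullet> X s' y) \<partial>?M) = (\<Sum>s<n. (\<integral>y. (\<Sum>s'<n. X s y \<bullet> X s' y) \<partial>?M))"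
      using iXX by (intro Bochner_Integration.integral_sum Bochner_Integration.integrable_sum) auto
    also have "\<dots> = (\<Sum>s<n. \<Sum>s'<n. (\<integral>y. X s y \<bullet> X s' y \<partial>?M))"
      using iXX by (intro sum.cong refl Bochner_Integration.integral_sum) auto
    finally show ?thesis unfolding Ysq by simp
  qed
  also have "\<dots> = (1 / real n)\<^sup>2 * (\<Sum>s<n. \<Sum>s'<n. b + (if s = s' then a - b else 0))"
    using EXX by simp
  also have "\<dots> = (1 / real n)\<^sup>2 * (real n * (real n * b + (a - b)))"
    by (simp add: sum.distrib)
  also have "\<dots> = b + (a - b) / real n" using n by (simp add: field_simps power2_eq_square)
  finally show "(\<integral>y. (norm (Y y))\<^sup>2 \<partial>?M) =
       (norm (integral\<^sup>L D g))\<^sup>2 + ((\<integral>\<xi>. (norm (g \<xi>))\<^sup>2 \<partial>D) - (norm (integral\<^sup>L D g))\<^sup>2) / real n"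
    unfolding a_def b_def .
  show "integrable ?M Y" unfolding YX using iX by (intro integrable_scaleR_right Bochner_Integration.integrable_sum) auto
  have "integral\<^sup>L ?M Y = (1 / real n) *\<^sub>R (\<Sum>s<n. integral\<^sup>L ?M (X s))"
    unfolding YX using iX by (simp add: Bochner_Integration.integral_sum)
  also have "\<dots> = (1 / real n) *\<^sub>R (\<Sum>s<n. integral\<^sup>L D g)" using EX by simp
  also have "\<dots> = integral\<^sup>L D g" using n by (simp add: sum_constant_scaleR scaleR_scaleR)
  finally show "integral\<^sup>L ?M Y = integral\<^sup>L D g" .
qed

end



locale kavg =
  fixes F :: "'a::euclidean_space \<Rightarrow> real" and gradF :: "'a \<Rightarrow> 'a"
    and D :: "'b measure" and G :: "'a \<Rightarrow> 'b \<Rightarrow> 'a"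
    and L M \<gamma> :: real and P K B :: nat and w :: 'a
  assumes probD: "prob_space D"
    and deriv: "\<And>v. (F has_derivative (\<lambda>h. gradF v \<bullet> h)) (at v)"
    and Lpos: "L > 0"
    and lip: "\<And>v v'. norm (gradF v - gradF v') \<le> L * norm (v - v')"
    and meas: "(\<lambda>(v, \<xi>). G v \<xi>) \<in> borel_measurable (borel \<Otimes>\<^sub>M D)"
    and int1: "\<And>v. integrable D (G v)"
    and unbiased: "\<And>v. (\<integral>\<xi>. G v \<xi> \<partial>D) = gradF v"
    and int2: "\<And>v. integrable D (\<lambda>\<xi>. (norm (G v \<xi>))\<^sup>2)"
    and var: "\<And>v. (\<integral>\<xi>. (norm (G v \<xi>))\<^sup>2 \<partial>D) - (norm (\<integral>\<xi>. G v \<xi> \<partial>D))\<^sup>2 \<le> M"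
    and B1: "B \<ge> 1" and Mnn: "M \<ge> 0"
begin

abbreviation "I \<equiv> kavg_index P K B"
abbreviation "\<Omega> \<equiv> PiM I (\<lambda>_. D)"
definition "V j k x = kavg_local G \<gamma> B w x j k"
definition "gg j k x = (1 / real B) *\<^sub>R (\<Sum>s<B. G (V j k x) (x (j, Suc k, s)))"
definition "Cs j k = {j} \<times> {1..k} \<times> {..<B}"
definition "Ts j k = {j} \<times> {Suc k} \<times> {..<(B::nat)}"

lemma finI: "finite I" unfolding kavg_index_def by simp

lemma PO: "prob_space \<Omega>" by (rule PiM_prob[OF probD])

lemma V0: "V j 0 x = w" unfolding V_def by simp

lemma V_Suc: "V j (Suc k) x = V j k x - \<gamma> *\<^sub>R gg j k x"
  unfolding V_def gg_def by (simp add: scaleR_scaleR)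

lemma depV: "dep (Cs j k) (V j k)"
proof (induction k)
  case 0 then show ?case unfolding dep_def V0 by simp
next
  case (Suc k)
  show ?case unfolding dep_def
  proof (intro allI impI)
    fix x y :: "nat \<times> nat \<times> nat \<Rightarrow> 'b" assume a: "\<forall>i\<in>Cs j (Suc k). x i = y i"
    have "Cs j k \<subseteq> Cs j (Suc k)" unfolding Cs_def by auto
    then have e1: "V j k x = V j k y" using Suc a unfolding dep_def by blast
    have e2: "x (j, Suc k, s) = y (j, Suc k, s)" if "s < B" for s using a that unfolding Cs_def by auto
    show "V j (Suc k) x = V j (Suc k) y" unfolding V_Suc gg_def e1 using e2 by simp
  qed
qed

lemma Gm: "G v \<in> borel_measurable D"
  using measurable_Pair2[OF meas, of v] by simp

lemma gradF_cont: "continuous_on UNIV gradF"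
proof -
  have "L-lipschitz_on UNIV gradF"
    by (rule lipschitz_onI) (use lip Lpos in \<open>auto simp: dist_norm less_imp_le\<close>)
  then show ?thesis by (rule lipschitz_on_continuous_on)
qed

lemma gradF_meas: "gradF \<in> borel_measurable borel"
  by (rule borel_measurable_continuous_onI[OF gradF_cont])

lemma F_meas: "F \<in> borel_measurable borel"
proof -
  have "continuous_on UNIV F"
    using deriv has_derivative_continuous continuous_at_imp_continuous_on by blast
  then show ?thesis by (rule borel_measurable_continuous_onI)
qed

lemma ggm_of:
  assumes IH: "V j k \<in> borel_measurable \<Omega>" and j: "j < P" and k: "k < K"
  shows "gg j k \<in> borel_measurable \<Omega>"
proof -
  have inI: "(j, Suc k, s) \<in> I" if "s < B" for s using j k that unfolding kavg_index_def by auto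
  have "(\<lambda>x. G (V j k x) (x (j, Suc k, s))) \<in> borel_measurable \<Omega>" if "s < B" for s
  proof -
    have "(\<lambda>x. (V j k x, x (j, Suc k, s))) \<in> measurable \<Omega> (borel \<Otimes>\<^sub>M D)"
      by (intro measurable_Pair IH measurable_component_singleton[OF inI[OF that]])
    from measurable_compose[OF this meas] show ?thesis by simp
  qed
  then show "gg j k \<in> borel_measurable \<Omega>"
    unfolding gg_def by (intro borel_measurable_scaleR borel_measurable_sum) auto
qed

lemma Vm: "j < P \<Longrightarrow> k \<le> K \<Longrightarrow> V j k \<in> borel_measurable \<Omega>"
proof (induction k)
  case 0 then show ?case unfolding V0 by simp
next
  case (Suc k)
  then have IH: "V j k \<in> borel_measurable \<Omega>" by simp
  have "gg j k \<in> borel_measurable \<Omega>" using ggm_of[OF IH] Suc by simp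
  then show ?case unfolding V_Suc[abs_def] using IH by (intro borel_measurable_diff borel_measurable_scaleR) auto
qed

lemma ggm: "j < P \<Longrightarrow> k < K \<Longrightarrow> gg j k \<in> borel_measurable \<Omega>"
  using ggm_of Vm by simp

lemma grad_bound: "(norm (gradF v))\<^sup>2 \<le> 2 * (norm (gradF w))\<^sup>2 + 2 * L\<^sup>2 * (norm (v - w))\<^sup>2"
proof -
  have "norm (gradF v) \<le> norm (gradF w) + L * norm (v - w)"
    using lip[of v w] norm_triangle_ineq2[of "gradF v" "gradF w"] by linarith
  then have "(norm (gradF v))\<^sup>2 \<le> (norm (gradF w) + L * norm (v - w))\<^sup>2"
    by (intro power_mono) auto
  also have "\<dots> \<le> 2 * (norm (gradF w))\<^sup>2 + 2 * (L * norm (v - w))\<^sup>2"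
    using zero_le_power2[of "norm (gradF w) - L * norm (v - w)"] unfolding power2_sum power2_diff by linarith
  finally show ?thesis by (simp add: power_mult_distrib)
qed

lemma sqint_grad:
  assumes "sqint \<Omega> f" shows "sqint \<Omega> (\<lambda>x. gradF (f x))"
  unfolding sqint_def
proof
  show m: "(\<lambda>x. gradF (f x)) \<in> borel_measurable \<Omega>"
    using measurable_compose[OF sqint_meas[OF PO assms] gradF_meas] .
  have d: "sqint \<Omega> (\<lambda>x. f x - w)" by (intro sqint_diff[OF PO] assms sqint_const[OF PO])
  show "integrable \<Omega> (\<lambda>x. (norm (gradF (f x)))\<^sup>2)"
  proof (rule Bochner_Integration.integrable_bound[where f="\<lambda>x. 2 * (norm (gradF w))\<^sup>2 + 2 * L\<^sup>2 * (norm (f x - w))\<^sup>2"])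
    show "integrable \<Omega> (\<lambda>x. 2 * (norm (gradF w))\<^sup>2 + 2 * L\<^sup>2 * (norm (f x - w))\<^sup>2)"
      using sqint_sq_integrable[OF PO d] ic[OF PO] by (intro Bochner_Integration.integrable_add) auto
    show "(\<lambda>x. (norm (gradF (f x)))\<^sup>2) \<in> borel_measurable \<Omega>" using m by simp
    show "AE x in \<Omega>. norm ((norm (gradF (f x)))\<^sup>2) \<le> norm (2 * (norm (gradF w))\<^sup>2 + 2 * L\<^sup>2 * (norm (f x - w))\<^sup>2)"
      using grad_bound by (simp add: add_nonneg_nonneg)
  qed
qed

lemma Ts_sub: "j < P \<Longrightarrow> k < K \<Longrightarrow> Ts j k \<subseteq> I"
  unfolding Ts_def kavg_index_def by auto

lemma depV': "j < P \<Longrightarrow> k < K \<Longrightarrow> dep (I - Ts j k) (V j k)"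
  by (rule dep_mono[OF depV]) (auto simp: Cs_def Ts_def kavg_index_def)

lemma step:
  assumes j: "j < P" and k: "k < K" and sV: "sqint \<Omega> (V j k)"
  shows "sqint \<Omega> (gg j k)"
    and "integral\<^sup>L \<Omega> (gg j k) = (\<integral>x. gradF (V j k x) \<partial>\<Omega>)"
    and "(\<integral>x. (norm (gg j k x))\<^sup>2 \<partial>\<Omega>) \<le> (\<integral>x. (norm (gradF (V j k x)))\<^sup>2 \<partial>\<Omega>) + M / real B"
proof -
  let ?T = "Ts j k"
  define \<Phi> where "\<Phi> = (\<lambda>v (y::nat\<times>nat\<times>nat\<Rightarrow>'b). (1 / real B) *\<^sub>R (\<Sum>s<B. G v (y (j, Suc k, s))))"
  have ggP: "gg j k x = \<Phi> (V j k x) x" for x unfolding gg_def \<Phi>_def by simp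
  have bt2: "integral\<^sup>L (PiM ?T (\<lambda>_. D)) (\<Phi> v) = integral\<^sup>L D (G v)" for v
    using batch(2)[OF probD Gm int1 int2 B1, of j "Suc k"] unfolding \<Phi>_def Ts_def by simp
  have bt3: "integrable (PiM ?T (\<lambda>_. D)) (\<lambda>y. (norm (\<Phi> v y))\<^sup>2)" for v
    using batch(3)[OF probD Gm int1 int2 B1, of j "Suc k"] unfolding \<Phi>_def Ts_def by simp
  have bt4: "(\<integral>y. (norm (\<Phi> v y))\<^sup>2 \<partial>PiM ?T (\<lambda>_. D)) =
       (norm (integral\<^sup>L D (G v)))\<^sup>2 + ((\<integral>\<xi>. (norm (G v \<xi>))\<^sup>2 \<partial>D) - (norm (integral\<^sup>L D (G v)))\<^sup>2) / real B" for v
    using batch(4)[OF probD Gm int1 int2 B1, of j "Suc k"] unfolding \<Phi>_def Ts_def by simp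
  have dP: "dep ?T (\<Phi> v)" for v unfolding dep_def \<Phi>_def Ts_def by auto
  have sG: "sqint \<Omega> (\<lambda>x. gradF (V j k x))" by (rule sqint_grad[OF sV])
  have ggm': "gg j k \<in> borel_measurable \<Omega>" using ggm j k by simp
  have bnd: "(\<integral>\<^sup>+y. ennreal ((norm (\<Phi> v y))\<^sup>2) \<partial>PiM ?T (\<lambda>_. D)) \<le> ennreal ((norm (gradF v))\<^sup>2 + M / real B)" for v
  proof -
    have "(\<integral>\<^sup>+y. ennreal ((norm (\<Phi> v y))\<^sup>2) \<partial>PiM ?T (\<lambda>_. D)) = ennreal (\<integral>y. (norm (\<Phi> v y))\<^sup>2 \<partial>PiM ?T (\<lambda>_. D))"
      by (rule nn_integral_eq_integral[OF bt3]) simp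
    also have "(\<integral>y. (norm (\<Phi> v y))\<^sup>2 \<partial>PiM ?T (\<lambda>_. D)) \<le> (norm (gradF v))\<^sup>2 + M / real B"
    proof -
      have "((\<integral>\<xi>. (norm (G v \<xi>))\<^sup>2 \<partial>D) - (norm (gradF v))\<^sup>2) / real B \<le> M / real B"
        using var[of v] unbiased[of v] B1 by (intro divide_right_mono) auto
      then show ?thesis unfolding bt4 unbiased by simp
    qed
    finally show ?thesis by (simp add: ennreal_leI)
  qed
  have "(\<integral>\<^sup>+x. ennreal ((norm (\<Phi> (V j k x) x))\<^sup>2) \<partial>\<Omega>) \<le> (\<integral>\<^sup>+x. ennreal ((norm (gradF (V j k x)))\<^sup>2 + M / real B) \<partial>\<Omega>)"
  proof (rule cond_N[OF probD finI Ts_sub[OF j k] depV'[OF j k], where \<Phi>="\<lambda>v y. ennreal ((norm (\<Phi> v y))\<^sup>2)"])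
    show "dep ?T (\<lambda>y. ennreal ((norm (\<Phi> v y))\<^sup>2))" for v using dP[of v] unfolding dep_def by metis
    show "(\<integral>\<^sup>+y. ennreal ((norm (\<Phi> v y))\<^sup>2) \<partial>PiM ?T (\<lambda>_. D)) \<le> ennreal ((norm (gradF v))\<^sup>2 + M / real B)" for v
      by (rule bnd)
    show "(\<lambda>x. ennreal ((norm (\<Phi> (V j k x) x))\<^sup>2)) \<in> borel_measurable \<Omega>"
      using ggm' unfolding ggP[symmetric] by simp
    show "(\<lambda>x. ennreal ((norm (gradF (V j k x)))\<^sup>2 + M / real B)) \<in> borel_measurable \<Omega>"
      using sqint_meas[OF PO sG] by simp
  qed
  also have "\<dots> = ennreal (\<integral>x. (norm (gradF (V j k x)))\<^sup>2 + M / real B \<partial>\<Omega>)"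
    using sqint_sq_integrable[OF PO sG] ic[OF PO] B1
    by (intro nn_integral_eq_integral Bochner_Integration.integrable_add AE_I2 add_nonneg_nonneg divide_nonneg_nonneg Mnn) auto
  also have "(\<integral>x. (norm (gradF (V j k x)))\<^sup>2 + M / real B \<partial>\<Omega>) = (\<integral>x. (norm (gradF (V j k x)))\<^sup>2 \<partial>\<Omega>) + M / real B"
    using sqint_sq_integrable[OF PO sG] prob_space.prob_space[OF PO] ic[OF PO]
    by (subst Bochner_Integration.integral_add) auto
  finally have nn: "(\<integral>\<^sup>+x. ennreal ((norm (gg j k x))\<^sup>2) \<partial>\<Omega>) \<le> ennreal ((\<integral>x. (norm (gradF (V j k x)))\<^sup>2 \<partial>\<Omega>) + M / real B)"
    unfolding ggP .
  have i2: "integrable \<Omega> (\<lambda>x. (norm (gg j k x))\<^sup>2)"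
  proof (rule integrableI_bounded)
    show "(\<lambda>x. (norm (gg j k x))\<^sup>2) \<in> borel_measurable \<Omega>" using ggm' by simp
    have "(\<integral>\<^sup>+x. ennreal ((norm (gg j k x))\<^sup>2) \<partial>\<Omega>) < \<top>"
      using nn le_less_trans ennreal_less_top by blast
    then show "(\<integral>\<^sup>+x. ennreal (norm ((norm (gg j k x))\<^sup>2)) \<partial>\<Omega>) < \<infinity>" by simp
  qed
  show sq: "sqint \<Omega> (gg j k)" unfolding sqint_def using ggm' i2 by simp
  show "(\<integral>x. (norm (gg j k x))\<^sup>2 \<partial>\<Omega>) \<le> (\<integral>x. (norm (gradF (V j k x)))\<^sup>2 \<partial>\<Omega>) + M / real B"
  proof -
    have "ennreal (\<integral>x. (norm (gg j k x))\<^sup>2 \<partial>\<Omega>) = (\<integral>\<^sup>+x. ennreal ((norm (gg j k x))\<^sup>2) \<partial>\<Omega>)"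
      by (rule nn_integral_eq_integral[OF i2, symmetric]) simp
    with nn have "ennreal (\<integral>x. (norm (gg j k x))\<^sup>2 \<partial>\<Omega>) \<le> ennreal ((\<integral>x. (norm (gradF (V j k x)))\<^sup>2 \<partial>\<Omega>) + M / real B)"
      by simp
    moreover have "0 \<le> (\<integral>x. (norm (gradF (V j k x)))\<^sup>2 \<partial>\<Omega>) + M / real B"
      using B1 Mnn by (intro add_nonneg_nonneg integral_nonneg_AE) (auto)
    ultimately show ?thesis by (simp add: ennreal_le_iff)
  qed
  show "integral\<^sup>L \<Omega> (gg j k) = (\<integral>x. gradF (V j k x) \<partial>\<Omega>)"
    unfolding ggP
  proof (rule cond_L[OF probD finI Ts_sub[OF j k] depV'[OF j k] dP])
    show "(\<integral>y. \<Phi> v y \<partial>PiM ?T (\<lambda>_. D)) = gradF v" for v using bt2 unbiased by simp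
    show "integrable \<Omega> (\<lambda>x. \<Phi> (V j k x) x)" using sqint_integrable[OF PO sq] unfolding ggP .
    show "integrable \<Omega> (\<lambda>x. gradF (V j k x))" using sqint_integrable[OF PO sG] .
  qed
qed

end



context kavg begin

lemma F_deriv_line: "((\<lambda>t. F (w + t *\<^sub>R d)) has_real_derivative (gradF (w + t *\<^sub>R d) \<bullet> d)) (at t)"
proof -
  have hd: "((\<lambda>t. w + t *\<^sub>R d) has_derivative (\<lambda>s. s *\<^sub>R d)) (at t)"
    by (auto intro!: derivative_eq_intros)
  have "((\<lambda>t. F (w + t *\<^sub>R d)) has_derivative (\<lambda>s. gradF (w + t *\<^sub>R d) \<bullet> (s *\<^sub>R d))) (at t)"
    using has_derivative_compose[OF hd deriv] .
  moreover have "(\<lambda>s. gradF (w + t *\<^sub>R d) \<bullet> (s *\<^sub>R d)) = (*) (gradF (w + t *\<^sub>R d) \<bullet> d)"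
    by (auto simp: mult.commute)
  ultimately show ?thesis unfolding has_field_derivative_def by simp
qed

lemma grad_line: "\<bar>gradF (w + t *\<^sub>R d) \<bullet> d - gradF w \<bullet> d\<bar> \<le> L * t * (norm d)\<^sup>2" if "t \<ge> 0" for t
proof -
  have "\<bar>gradF (w + t *\<^sub>R d) \<bullet> d - gradF w \<bullet> d\<bar> = \<bar>(gradF (w + t *\<^sub>R d) - gradF w) \<bullet> d\<bar>"
    by (simp add: inner_diff_left)
  also have "\<dots> \<le> norm (gradF (w + t *\<^sub>R d) - gradF w) * norm d" by (rule Cauchy_Schwarz_ineq2)
  also have "\<dots> \<le> (L * norm (t *\<^sub>R d)) * norm d"
    using lip[of "w + t *\<^sub>R d" w] by (intro mult_right_mono) auto
  also have "\<dots> = L * t * (norm d)\<^sup>2" using that by (simp add: power2_eq_square)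
  finally show ?thesis .
qed

lemma descent:
  shows "F (w + d) \<le> F w + gradF w \<bullet> d + L / 2 * (norm d)\<^sup>2"
    and "F (w + d) \<ge> F w + gradF w \<bullet> d - L / 2 * (norm d)\<^sup>2"
proof -
  let ?c = "gradF w \<bullet> d" and ?n = "(norm d)\<^sup>2"
  define \<phi> where "\<phi> = (\<lambda>t. F (w + t *\<^sub>R d) - t * ?c - L / 2 * t\<^sup>2 * ?n)"
  define \<psi> where "\<psi> = (\<lambda>t. F (w + t *\<^sub>R d) - t * ?c + L / 2 * t\<^sup>2 * ?n)"
  have d\<phi>: "DERIV \<phi> t :> gradF (w + t *\<^sub>R d) \<bullet> d - ?c - L * t * ?n" for t
    unfolding \<phi>_def by (rule derivative_eq_intros F_deriv_line refl | simp)+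
  have d\<psi>: "DERIV \<psi> t :> gradF (w + t *\<^sub>R d) \<bullet> d - ?c + L * t * ?n" for t
    unfolding \<psi>_def by (rule derivative_eq_intros F_deriv_line refl | simp)+
  have "\<phi> 1 \<le> \<phi> 0"
  proof (rule DERIV_nonpos_imp_nonincreasing[of 0 1])
    fix t :: real assume "0 \<le> t" "t \<le> 1"
    then have "\<bar>gradF (w + t *\<^sub>R d) \<bullet> d - ?c\<bar> \<le> L * t * ?n" using grad_line[where t=t and d=d] by simp
    then have "gradF (w + t *\<^sub>R d) \<bullet> d - ?c - L * t * ?n \<le> 0" by (simp add: abs_le_iff)
    then show "\<exists>y. DERIV \<phi> t :> y \<and> y \<le> 0" using d\<phi>[of t] by blast
  qed simp
  then show "F (w + d) \<le> F w + gradF w \<bullet> d + L / 2 * (norm d)\<^sup>2" unfolding \<phi>_def by simp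
  have "\<psi> 0 \<le> \<psi> 1"
  proof (rule DERIV_nonneg_imp_nondecreasing[of 0 1])
    fix t :: real assume "0 \<le> t" "t \<le> 1"
    then have "\<bar>gradF (w + t *\<^sub>R d) \<bullet> d - ?c\<bar> \<le> L * t * ?n" using grad_line[where t=t and d=d] by simp
    then have "gradF (w + t *\<^sub>R d) \<bullet> d - ?c + L * t * ?n \<ge> 0" by (simp add: abs_le_iff)
    then show "\<exists>y. DERIV \<psi> t :> y \<and> y \<ge> 0" using d\<psi>[of t] by blast
  qed simp
  then show "F (w + d) \<ge> F w + gradF w \<bullet> d - L / 2 * (norm d)\<^sup>2" unfolding \<psi>_def by simp
qed

end



lemma swap_sum:
  fixes a :: "nat \<Rightarrow> real"
  shows "(\<Sum>k<K. real k * (\<Sum>k'<k. a k')) = (\<Sum>k'<K. a k' * (\<Sum>k\<in>{k'<..<K}. real k))"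
proof (induction K)
  case 0 then show ?case by simp
next
  case (Suc K)
  have e: "{k'<..<Suc K} = insert K {k'<..<K}" if "k' < K" for k' using that by auto
  have "(\<Sum>k'<K. a k' * (\<Sum>k\<in>{k'<..<Suc K}. real k)) = (\<Sum>k'<K. a k' * (\<Sum>k\<in>{k'<..<K}. real k) + a k' * real K)"
    by (intro sum.cong refl) (simp add: e distrib_left)
  moreover have "{K<..<Suc K} = {}" by auto
  ultimately show ?case using Suc by (simp add: sum.distrib sum_distrib_left sum_distrib_right mult.commute)
qed

lemma gauss_real: "2 * (\<Sum>k<K. real k) = real K * (real K - 1)"
  by (induction K) (auto simp: algebra_simps)

lemma sq_sum_real: "6 * (\<Sum>k<K. (real k)\<^sup>2) = (real K - 1) * real K * (2 * real K - 1)"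
  by (induction K) (auto simp: algebra_simps power2_eq_square)

lemma alg:
  fixes a e :: "nat \<Rightarrow> real" and \<gamma> L m \<delta> A0 :: real and K :: nat
  assumes K1: "K \<ge> 1" and an: "\<And>k. k < K \<Longrightarrow> a k \<ge> 0" and a0: "a 0 = A0"
    and ek: "\<And>k. k < K \<Longrightarrow> e k \<le> \<gamma>\<^sup>2 * real k * (\<Sum>k'<k. a k' + m)"
    and gpos: "\<gamma> > 0" and Lpos: "L > 0" and mnn: "m \<ge> 0"
    and step1: "1 \<ge> L\<^sup>2 * \<gamma>\<^sup>2 * (real K + 1) * (real K - 2) / 2 + L * \<gamma> * real K"
    and step2: "1 - \<delta> \<ge> L\<^sup>2 * \<gamma>\<^sup>2"
  shows "- (\<gamma> / 2) * (\<Sum>k<K. A0 + a k - L\<^sup>2 * e k) + (L * \<gamma>\<^sup>2 * real K / 2) * (\<Sum>k<K. a k)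
     \<le> - ((real K - 1 + \<delta>) * \<gamma> / 2) * A0 + (L\<^sup>2 * \<gamma>^3 * m / 2) * (\<Sum>k<K. (real k)\<^sup>2)"
proof -
  define c where "c = (\<lambda>k'. \<Sum>k\<in>{k'<..<K}. real k)"
  define t where "t = (\<lambda>k'. L\<^sup>2 * \<gamma>\<^sup>2 * c k' - 1 + L * \<gamma> * real K)"
  have A0nn: "A0 \<ge> 0" using an[of 0] K1 a0 by simp
  have c0: "c 0 = (\<Sum>k<K. real k)"
  proof -
    have "{0<..<K} = {..<K} - {0}" by auto
    then show ?thesis unfolding c_def using K1 by (simp add: sum_diff1)
  qed
  have c1: "c k' \<le> c 0 - 1" if "1 \<le> k'" "k' < K" for k'
  proof -
    have "c k' \<le> c 1" unfolding c_def using that by (intro sum_mono2) auto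
    moreover have "c 1 = c 0 - 1"
    proof -
      have "{1<..<K} = {0<..<K} - {1}" by auto
      then show ?thesis unfolding c_def using that by (simp add: sum_diff1)
    qed
    ultimately show ?thesis by simp
  qed
  have s1: "L\<^sup>2 * \<gamma>\<^sup>2 * (c 0 - 1) + L * \<gamma> * real K \<le> 1"
  proof -
    have e: "(real K + 1) * (real K - 2) / 2 = c 0 - 1" using gauss_real[of K] unfolding c0 by (simp add: algebra_simps field_simps)
    have "L\<^sup>2 * \<gamma>\<^sup>2 * (real K + 1) * (real K - 2) / 2 = L\<^sup>2 * \<gamma>\<^sup>2 * ((real K + 1) * (real K - 2) / 2)"
      by simp
    then show ?thesis using step1 unfolding e by linarith
  qed
  have t0: "t 0 \<le> 1 - \<delta>" using s1 step2 unfolding t_def by (simp add: algebra_simps)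
  have tk: "t k' \<le> 0" if "1 \<le> k'" "k' < K" for k'
  proof -
    have "L\<^sup>2 * \<gamma>\<^sup>2 * c k' \<le> L\<^sup>2 * \<gamma>\<^sup>2 * (c 0 - 1)"
      using c1[OF that] by (intro mult_left_mono) auto
    then show ?thesis using s1 unfolding t_def by simp
  qed
  have R: "(\<Sum>k'<K. a k' * t k') \<le> (1 - \<delta>) * A0"
  proof -
    obtain K' where K': "K = Suc K'" using K1 by (cases K) auto
    have "(\<Sum>k'<K. a k' * t k') = a 0 * t 0 + (\<Sum>k<K'. a (Suc k) * t (Suc k))"
      unfolding K' by (rule sum.lessThan_Suc_shift)
    also have "(\<Sum>k<K'. a (Suc k) * t (Suc k)) \<le> 0"
      by (intro sum_nonpos mult_nonneg_nonpos an tk) (auto simp: K')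
    also have "a 0 * t 0 \<le> A0 * (1 - \<delta>)" using mult_left_mono[OF t0 A0nn] a0 by simp
    finally show ?thesis by (simp add: mult.commute)
  qed
  have e_sum: "(\<Sum>k<K. A0 + a k - L\<^sup>2 * e k) \<ge> (\<Sum>k<K. A0 + a k - L\<^sup>2 * (\<gamma>\<^sup>2 * real k * (\<Sum>k'<k. a k' + m)))"
    using ek Lpos by (intro sum_mono) (simp add: mult_left_mono)
  have dbl: "(\<Sum>k<K. real k * (\<Sum>k'<k. a k' + m)) = (\<Sum>k'<K. a k' * c k') + m * (\<Sum>k<K. (real k)\<^sup>2)"
  proof -
    have i: "(\<Sum>k'<k. a k' + m) = (\<Sum>k'<k. a k') + real k * m" for k by (simp add: sum.distrib)
    have "(\<Sum>k<K. real k * (\<Sum>k'<k. a k' + m)) = (\<Sum>k<K. real k * (\<Sum>k'<k. a k') + m * (real k)\<^sup>2)"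
      unfolding i by (intro sum.cong refl) (simp add: algebra_simps power2_eq_square)
    also have "\<dots> = (\<Sum>k<K. real k * (\<Sum>k'<k. a k')) + m * (\<Sum>k<K. (real k)\<^sup>2)"
      by (simp add: sum.distrib sum_distrib_left)
    finally show ?thesis unfolding c_def swap_sum .
  qed
  have "(\<Sum>k<K. A0 + a k - L\<^sup>2 * (\<gamma>\<^sup>2 * real k * (\<Sum>k'<k. a k' + m)))
      = real K * A0 + (\<Sum>k<K. a k) - L\<^sup>2 * \<gamma>\<^sup>2 * (\<Sum>k<K. real k * (\<Sum>k'<k. a k' + m))"
    by (simp add: sum.distrib sum_subtractf sum_distrib_left mult.assoc)
  also have "\<dots> = real K * A0 + (\<Sum>k<K. a k) - L\<^sup>2 * \<gamma>\<^sup>2 * (\<Sum>k'<K. a k' * c k') - L\<^sup>2 * \<gamma>\<^sup>2 * m * (\<Sum>k<K. (real k)\<^sup>2)"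
    unfolding dbl by (simp add: algebra_simps)
  finally have ES: "(\<Sum>k<K. A0 + a k - L\<^sup>2 * e k) \<ge> real K * A0 + (\<Sum>k<K. a k) - L\<^sup>2 * \<gamma>\<^sup>2 * (\<Sum>k'<K. a k' * c k') - L\<^sup>2 * \<gamma>\<^sup>2 * m * (\<Sum>k<K. (real k)\<^sup>2)"
    using e_sum by linarith
  have Rt: "(\<Sum>k'<K. a k' * t k') = L\<^sup>2 * \<gamma>\<^sup>2 * (\<Sum>k'<K. a k' * c k') - (\<Sum>k<K. a k) + L * \<gamma> * real K * (\<Sum>k<K. a k)"
    unfolding t_def by (simp add: algebra_simps sum.distrib sum_subtractf sum_distrib_left)
  have "- (\<gamma> / 2) * (\<Sum>k<K. A0 + a k - L\<^sup>2 * e k) \<le>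
     - (\<gamma> / 2) * (real K * A0 + (\<Sum>k<K. a k) - L\<^sup>2 * \<gamma>\<^sup>2 * (\<Sum>k'<K. a k' * c k') - L\<^sup>2 * \<gamma>\<^sup>2 * m * (\<Sum>k<K. (real k)\<^sup>2))"
    using ES gpos by (intro mult_left_mono_neg) auto
  then have "- (\<gamma> / 2) * (\<Sum>k<K. A0 + a k - L\<^sup>2 * e k) + (L * \<gamma>\<^sup>2 * real K / 2) * (\<Sum>k<K. a k)
     \<le> - (\<gamma> / 2) * real K * A0 + (\<gamma> / 2) * (\<Sum>k'<K. a k' * t k') + (L\<^sup>2 * \<gamma>^3 * m / 2) * (\<Sum>k<K. (real k)\<^sup>2)"
    unfolding Rt by (simp add: algebra_simps power2_eq_square power3_eq_cube)
  also have "\<dots> \<le> - (\<gamma> / 2) * real K * A0 + (\<gamma> / 2) * ((1 - \<delta>) * A0) + (L\<^sup>2 * \<gamma>^3 * m / 2) * (\<Sum>k<K. (real k)\<^sup>2)"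
    using R gpos by simp
  also have "\<dots> = - ((real K - 1 + \<delta>) * \<gamma> / 2) * A0 + (L\<^sup>2 * \<gamma>^3 * m / 2) * (\<Sum>k<K. (real k)\<^sup>2)"
    by (simp add: field_simps)
  finally show ?thesis .
qed

lemma norm_int_sq:
  fixes X :: "_ \<Rightarrow> 'c::euclidean_space"
  assumes PM: "prob_space M" and s: "sqint M X"
  shows "(norm (integral\<^sup>L M X))\<^sup>2 \<le> (\<integral>x. (norm (X x))\<^sup>2 \<partial>M)"
proof -
  define c where "c = integral\<^sup>L M X"
  have iX: "integrable M X" using sqint_integrable[OF PM s] .
  have i2: "integrable M (\<lambda>x. (norm (X x))\<^sup>2)" using sqint_sq_integrable[OF PM s] .
  have iXc: "integrable M (\<lambda>x. X x \<bullet> c)" using iX by simp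
  have ic': "integrable M (\<lambda>x. (norm c)\<^sup>2)" using ic[OF PM] .
  have eq: "(norm (X x - c))\<^sup>2 = ((norm (X x))\<^sup>2 - 2 * (X x \<bullet> c)) + (norm c)\<^sup>2" for x
    by (simp add: power2_norm_eq_inner inner_diff_left inner_diff_right inner_commute algebra_simps)
  have "0 \<le> (\<integral>x. (norm (X x - c))\<^sup>2 \<partial>M)" by (rule integral_nonneg_AE) simp
  also have "\<dots> = (\<integral>x. (norm (X x))\<^sup>2 - 2 * (X x \<bullet> c) \<partial>M) + (\<integral>x. (norm c)\<^sup>2 \<partial>M)"
    unfolding eq using i2 iXc ic' by (intro Bochner_Integration.integral_add) auto
  also have "(\<integral>x. (norm (X x))\<^sup>2 - 2 * (X x \<bullet> c) \<partial>M) = (\<integral>x. (norm (X x))\<^sup>2 \<partial>M) - (\<integral>x. 2 * (X x \<bullet> c) \<partial>M)"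
    using i2 iXc by (intro Bochner_Integration.integral_diff) auto
  also have "(\<integral>x. 2 * (X x \<bullet> c) \<partial>M) = 2 * (c \<bullet> c)" using iX unfolding c_def by simp
  also have "(\<integral>x. (norm c)\<^sup>2 \<partial>M) = (norm c)\<^sup>2" using prob_space.prob_space[OF PM] by simp
  finally show ?thesis unfolding c_def[symmetric] by (simp add: power2_norm_eq_inner)
qed

locale kavg2 = kavg +
  assumes P1: "P \<ge> 1" and K1: "K \<ge> 1" and gpos: "\<gamma> > 0"
begin

lemma sqV: "j < P \<Longrightarrow> k \<le> K \<Longrightarrow> sqint \<Omega> (V j k)"
proof (induction k)
  case 0 then show ?case unfolding V0 using sqint_const[OF PO] by simp
next
  case (Suc k)
  then have "sqint \<Omega> (V j k)" by simp
  then have "sqint \<Omega> (gg j k)" using step(1) Suc by simp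
  then show ?case unfolding V_Suc[abs_def] using Suc
    by (intro sqint_diff[OF PO] sqint_scaleR[OF PO]) auto
qed

lemma stepJ:
  assumes "j < P" "k < K"
  shows "sqint \<Omega> (gg j k)"
    and "integral\<^sup>L \<Omega> (gg j k) = (\<integral>x. gradF (V j k x) \<partial>\<Omega>)"
    and "(\<integral>x. (norm (gg j k x))\<^sup>2 \<partial>\<Omega>) \<le> (\<integral>x. (norm (gradF (V j k x)))\<^sup>2 \<partial>\<Omega>) + M / real B"
  using step[OF assms sqV] assms by auto

lemma dep_gg: "dep (Cs j (Suc k)) (gg j k)"
  unfolding dep_def
proof (intro allI impI)
  fix x y :: "nat \<times> nat \<times> nat \<Rightarrow> 'b" assume a: "\<forall>i\<in>Cs j (Suc k). x i = y i"
  have "Cs j k \<subseteq> Cs j (Suc k)" unfolding Cs_def by auto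
  then have e1: "V j k x = V j k y" using depV[of j k] a unfolding dep_def by blast
  have e2: "x (j, Suc k, s) = y (j, Suc k, s)" if "s < B" for s using a that unfolding Cs_def by auto
  show "gg j k x = gg j k y" unfolding gg_def e1 using e2 by simp
qed

lemma V_tel: "V j k x - w = - \<gamma> *\<^sub>R (\<Sum>k'<k. gg j k' x)"
  by (induction k) (simp_all add: V0 V_Suc algebra_simps)

definition "S j x = (\<Sum>k<K. gg j k x)"

lemma sqS: "j < P \<Longrightarrow> sqint \<Omega> (S j)"
  unfolding S_def[abs_def] using stepJ(1) by (intro sqint_sum[OF PO]) auto

lemma depS: "dep (Cs j K) (S j)"
  unfolding dep_def S_def
proof (intro allI impI sum.cong refl)
  fix x y :: "nat \<times> nat \<times> nat \<Rightarrow> 'b" and k assume a: "\<forall>i\<in>Cs j K. x i = y i" and k: "k \<in> {..<K}"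
  have "Cs j (Suc k) \<subseteq> Cs j K" using k unfolding Cs_def by auto
  then show "gg j k x = gg j k y" using dep_gg[of j k] a unfolding dep_def by blast
qed

lemma kavg_step_eq: "kavg_step G \<gamma> B K P w x = w + (- (\<gamma> / real P) *\<^sub>R (\<Sum>j<P. S j x))"
proof -
  have "kavg_step G \<gamma> B K P w x = (1 / real P) *\<^sub>R (\<Sum>j<P. V j K x)"
    unfolding kavg_step_def V_def ..
  also have "(\<Sum>j<P. V j K x) = (\<Sum>j<P. w + (- \<gamma> *\<^sub>R S j x))"
    using V_tel[of _ K x] unfolding S_def by (intro sum.cong refl) (simp add: algebra_simps)
  also have "\<dots> = real P *\<^sub>R w + (- \<gamma>) *\<^sub>R (\<Sum>j<P. S j x)"
    by (simp add: sum_subtractf scaleR_sum_right sum_negf sum_constant_scaleR)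
  finally show ?thesis using P1 by (simp add: scaleR_diff_right scaleR_scaleR)
qed

definition "a j k = (\<integral>x. (norm (gradF (V j k x)))\<^sup>2 \<partial>\<Omega>)"
definition "q j k = (\<integral>x. (norm (gg j k x))\<^sup>2 \<partial>\<Omega>)"
definition "e j k = (\<integral>x. (norm (V j k x - w))\<^sup>2 \<partial>\<Omega>)"
definition "Eh j k = (\<integral>x. gradF (V j k x) \<partial>\<Omega>)"

lemma sqG: "j < P \<Longrightarrow> k \<le> K \<Longrightarrow> sqint \<Omega> (\<lambda>x. gradF (V j k x))"
  using sqint_grad[OF sqV] .

lemma sqVw: "j < P \<Longrightarrow> k \<le> K \<Longrightarrow> sqint \<Omega> (\<lambda>x. V j k x - w)"
  using sqint_diff[OF PO sqV sqint_const[OF PO]] .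

lemma inner_lb:
  assumes j: "j < P" and k: "k \<le> K"
  shows "(\<integral>x. gradF w \<bullet> gradF (V j k x) \<partial>\<Omega>) \<ge> ((norm (gradF w))\<^sup>2 + a j k - L\<^sup>2 * e j k) / 2"
proof -
  let ?h0 = "gradF w"
  have pw: "?h0 \<bullet> gradF v \<ge> ((norm ?h0)\<^sup>2 + (norm (gradF v))\<^sup>2 - L\<^sup>2 * (norm (v - w))\<^sup>2) / 2" for v
  proof -
    have "(norm (?h0 - gradF v))\<^sup>2 \<le> (L * norm (w - v))\<^sup>2"
      using lip[of w v] by (intro power_mono) auto
    also have "\<dots> = L\<^sup>2 * (norm (v - w))\<^sup>2" by (simp add: power_mult_distrib norm_minus_commute)
    finally have "(norm (?h0 - gradF v))\<^sup>2 \<le> L\<^sup>2 * (norm (v - w))\<^sup>2" .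
    moreover have "(norm (?h0 - gradF v))\<^sup>2 = (norm ?h0)\<^sup>2 + (norm (gradF v))\<^sup>2 - 2 * (?h0 \<bullet> gradF v)"
      by (simp add: power2_norm_eq_inner inner_diff_left inner_diff_right inner_commute)
    ultimately show ?thesis by simp
  qed
  have i1: "integrable \<Omega> (\<lambda>x. (norm (gradF (V j k x)))\<^sup>2)" using sqint_sq_integrable[OF PO sqG[OF j k]] .
  have i2: "integrable \<Omega> (\<lambda>x. (norm (V j k x - w))\<^sup>2)" using sqint_sq_integrable[OF PO sqVw[OF j k]] .
  have i3: "integrable \<Omega> (\<lambda>x. ?h0 \<bullet> gradF (V j k x))" using sqint_integrable[OF PO sqG[OF j k]] by simp
  have "(\<integral>x. ((norm ?h0)\<^sup>2 + (norm (gradF (V j k x)))\<^sup>2 - L\<^sup>2 * (norm (V j k x - w))\<^sup>2) / 2 \<partial>\<Omega>)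
      \<le> (\<integral>x. ?h0 \<bullet> gradF (V j k x) \<partial>\<Omega>)"
    using i1 i2 i3 ic[OF PO] pw
    by (intro integral_mono integrable_divide_zero Bochner_Integration.integrable_diff Bochner_Integration.integrable_add integrable_mult_right) auto
  also have "(\<integral>x. ((norm ?h0)\<^sup>2 + (norm (gradF (V j k x)))\<^sup>2 - L\<^sup>2 * (norm (V j k x - w))\<^sup>2) / 2 \<partial>\<Omega>)
     = ((norm ?h0)\<^sup>2 + a j k - L\<^sup>2 * e j k) / 2"
  proof -
    have "(\<integral>x. ((norm ?h0)\<^sup>2 + (norm (gradF (V j k x)))\<^sup>2 - L\<^sup>2 * (norm (V j k x - w))\<^sup>2) / 2 \<partial>\<Omega>)
       = (\<integral>x. ((norm ?h0)\<^sup>2 + (norm (gradF (V j k x)))\<^sup>2 - L\<^sup>2 * (norm (V j k x - w))\<^sup>2) \<partial>\<Omega>) / 2"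
      by simp
    also have "(\<integral>x. ((norm ?h0)\<^sup>2 + (norm (gradF (V j k x)))\<^sup>2 - L\<^sup>2 * (norm (V j k x - w))\<^sup>2) \<partial>\<Omega>)
       = (\<integral>x. ((norm ?h0)\<^sup>2 + (norm (gradF (V j k x)))\<^sup>2) \<partial>\<Omega>) - (\<integral>x. L\<^sup>2 * (norm (V j k x - w))\<^sup>2 \<partial>\<Omega>)"
      using i1 i2 ic[OF PO] by (intro Bochner_Integration.integral_diff Bochner_Integration.integrable_add) auto
    also have "(\<integral>x. ((norm ?h0)\<^sup>2 + (norm (gradF (V j k x)))\<^sup>2) \<partial>\<Omega>) = (norm ?h0)\<^sup>2 + a j k"
      unfolding a_def using i1 ic[OF PO] prob_space.prob_space[OF PO]
      by (subst Bochner_Integration.integral_add) auto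
    also have "(\<integral>x. L\<^sup>2 * (norm (V j k x - w))\<^sup>2 \<partial>\<Omega>) = L\<^sup>2 * e j k" unfolding e_def by simp
    finally show ?thesis .
  qed
  finally show ?thesis .
qed

lemma e_bound:
  assumes j: "j < P" and k: "k \<le> K"
  shows "e j k \<le> \<gamma>\<^sup>2 * real k * (\<Sum>k'<k. q j k')"
proof -
  have iq: "k' < k \<Longrightarrow> integrable \<Omega> (\<lambda>x. (norm (gg j k' x))\<^sup>2)" for k'
    using sqint_sq_integrable[OF PO stepJ(1)[OF j]] k by simp
  have pw: "(norm (V j k x - w))\<^sup>2 \<le> \<gamma>\<^sup>2 * real k * (\<Sum>k'<k. (norm (gg j k' x))\<^sup>2)" for x
  proof -
    have "(norm (V j k x - w))\<^sup>2 = \<gamma>\<^sup>2 * (norm (\<Sum>k'<k. gg j k' x))\<^sup>2"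
      unfolding V_tel by (simp add: power_mult_distrib)
    also have "\<dots> \<le> \<gamma>\<^sup>2 * (real k * (\<Sum>k'<k. (norm (gg j k' x))\<^sup>2))"
      by (intro mult_left_mono norm_sq_sum_le) auto
    finally show ?thesis by simp
  qed
  have "e j k \<le> (\<integral>x. \<gamma>\<^sup>2 * real k * (\<Sum>k'<k. (norm (gg j k' x))\<^sup>2) \<partial>\<Omega>)"
    unfolding e_def using sqint_sq_integrable[OF PO sqVw[OF j k]] iq pw
    by (intro integral_mono Bochner_Integration.integrable_sum integrable_mult_right) auto
  also have "\<dots> = \<gamma>\<^sup>2 * real k * (\<Sum>k'<k. q j k')"
    unfolding q_def using iq by (subst integral_mult_right_zero) (simp add: Bochner_Integration.integral_sum)
  finally show ?thesis .
qed

lemma ES: assumes j: "j < P" shows "integral\<^sup>L \<Omega> (S j) = (\<Sum>k<K. Eh j k)"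
proof -
  have "k < K \<Longrightarrow> integrable \<Omega> (gg j k)" for k using sqint_integrable[OF PO stepJ(1)[OF j]] by simp
  then show ?thesis
    unfolding S_def[abs_def] Eh_def using stepJ(2)[OF j]
    by (subst Bochner_Integration.integral_sum) auto
qed

lemma ESS:
  assumes "j < P" "j' < P" "j \<noteq> j'"
  shows "(\<integral>x. S j x \<bullet> S j' x \<partial>\<Omega>) = integral\<^sup>L \<Omega> (S j) \<bullet> integral\<^sup>L \<Omega> (S j')"
proof (rule indep_inner[OF probD finI _ _ _ sqint_meas[OF PO sqS] sqint_meas[OF PO sqS] depS depS
      sqint_integrable[OF PO sqS] sqint_integrable[OF PO sqS] sqint_inner[OF PO sqS sqS]])
  show "Cs j K \<subseteq> I" "Cs j' K \<subseteq> I" "Cs j K \<inter> Cs j' K = {}"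
    using assms unfolding Cs_def kavg_index_def by auto
qed (use assms in auto)

lemma norm_sq_double:
  fixes f :: "nat \<Rightarrow> 'c::real_inner"
  shows "(norm (\<Sum>i<n. f i))\<^sup>2 = (\<Sum>i<n. \<Sum>i'<n. f i \<bullet> f i')"
  unfolding power2_norm_eq_inner by (simp only: inner_sum_left inner_sum_right, subst sum.swap, rule refl)

lemma mS: "j < P \<Longrightarrow> (norm (integral\<^sup>L \<Omega> (S j)))\<^sup>2 \<le> real K * (\<Sum>k<K. a j k)"
proof -
  assume j: "j < P"
  have "(norm (integral\<^sup>L \<Omega> (S j)))\<^sup>2 = (norm (\<Sum>k<K. Eh j k))\<^sup>2" using ES[OF j] by simp
  also have "\<dots> \<le> real K * (\<Sum>k<K. (norm (Eh j k))\<^sup>2)" by (rule norm_sq_sum_le)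
  also have "\<dots> \<le> real K * (\<Sum>k<K. a j k)"
    unfolding Eh_def a_def using norm_int_sq[OF PO sqG[OF j]]
    by (intro mult_left_mono sum_mono) auto
  finally show ?thesis .
qed

lemma qa: "j < P \<Longrightarrow> k < K \<Longrightarrow> q j k \<le> a j k + M / real B"
  unfolding q_def a_def using stepJ(3) by simp

lemma ES2: assumes j: "j < P" shows "(\<integral>x. (norm (S j x))\<^sup>2 \<partial>\<Omega>) \<le> real K * (\<Sum>k<K. a j k) + (real K)\<^sup>2 * (M / real B)"
proof -
  have iq: "k < K \<Longrightarrow> integrable \<Omega> (\<lambda>x. (norm (gg j k x))\<^sup>2)" for k
    using sqint_sq_integrable[OF PO stepJ(1)[OF j]] by simp
  have "(\<integral>x. (norm (S j x))\<^sup>2 \<partial>\<Omega>) \<le> (\<integral>x. real K * (\<Sum>k<K. (norm (gg j k x))\<^sup>2) \<partial>\<Omega>)"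
    unfolding S_def using sqint_sq_integrable[OF PO sqS[OF j]] iq norm_sq_sum_le
    by (intro integral_mono Bochner_Integration.integrable_sum integrable_mult_right) (auto simp: S_def)
  also have "\<dots> = real K * (\<Sum>k<K. q j k)"
    unfolding q_def using iq by (simp add: Bochner_Integration.integral_sum)
  also have "\<dots> \<le> real K * (\<Sum>k<K. a j k + M / real B)"
    using qa[OF j] by (intro mult_left_mono sum_mono) auto
  also have "\<dots> = real K * (\<Sum>k<K. a j k) + (real K)\<^sup>2 * (M / real B)"
    by (simp add: sum.distrib algebra_simps power2_eq_square)
  finally show ?thesis .
qed

lemma Ed2: "(\<integral>x. (norm (\<Sum>j<P. S j x))\<^sup>2 \<partial>\<Omega>) \<le> real P * real K * (\<Sum>j<P. \<Sum>k<K. a j k) + real P * (real K)\<^sup>2 * (M / real B)"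
proof -
  define m where "m j = integral\<^sup>L \<Omega> (S j)" for j
  have iSS: "j < P \<Longrightarrow> j' < P \<Longrightarrow> integrable \<Omega> (\<lambda>x. S j x \<bullet> S j' x)" for j j'
    using sqint_inner[OF PO sqS sqS] .
  have "(\<integral>x. (norm (\<Sum>j<P. S j x))\<^sup>2 \<partial>\<Omega>) = (\<integral>x. (\<Sum>j<P. \<Sum>j'<P. S j x \<bullet> S j' x) \<partial>\<Omega>)"
    unfolding norm_sq_double ..
  also have "\<dots> = (\<Sum>j<P. (\<integral>x. (\<Sum>j'<P. S j x \<bullet> S j' x) \<partial>\<Omega>))"
    using iSS by (intro Bochner_Integration.integral_sum Bochner_Integration.integrable_sum) auto
  also have "\<dots> = (\<Sum>j<P. \<Sum>j'<P. (\<integral>x. S j x \<bullet> S j' x \<partial>\<Omega>))"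
    using iSS by (intro sum.cong refl Bochner_Integration.integral_sum) auto
  also have "\<dots> = (\<Sum>j<P. \<Sum>j'<P. m j \<bullet> m j' + (if j' = j then (\<integral>x. (norm (S j x))\<^sup>2 \<partial>\<Omega>) - (norm (m j))\<^sup>2 else 0))"
  proof (intro sum.cong refl)
    fix j j' assume j: "j \<in> {..<P}" and j': "j' \<in> {..<P}"
    show "(\<integral>x. S j x \<bullet> S j' x \<partial>\<Omega>) = m j \<bullet> m j' + (if j' = j then (\<integral>x. (norm (S j x))\<^sup>2 \<partial>\<Omega>) - (norm (m j))\<^sup>2 else 0)"
    proof (cases "j' = j")
      case True then show ?thesis by (simp add: power2_norm_eq_inner)
    next
      case False then show ?thesis using ESS[of j j'] j j' unfolding m_def by auto
    qed
  qed
  also have "\<dots> = (\<Sum>j<P. \<Sum>j'<P. m j \<bullet> m j') + (\<Sum>j<P. (\<integral>x. (norm (S j x))\<^sup>2 \<partial>\<Omega>) - (norm (m j))\<^sup>2)"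
    by (simp add: sum.distrib)
  also have "(\<Sum>j<P. \<Sum>j'<P. m j \<bullet> m j') = (norm (\<Sum>j<P. m j))\<^sup>2" unfolding norm_sq_double ..
  also have "\<dots> \<le> real P * (\<Sum>j<P. (norm (m j))\<^sup>2)" by (rule norm_sq_sum_le)
  finally have A: "(\<integral>x. (norm (\<Sum>j<P. S j x))\<^sup>2 \<partial>\<Omega>) \<le> (real P - 1) * (\<Sum>j<P. (norm (m j))\<^sup>2) + (\<Sum>j<P. (\<integral>x. (norm (S j x))\<^sup>2 \<partial>\<Omega>))"
    by (simp add: sum_subtractf algebra_simps)
  have B: "(real P - 1) * (\<Sum>j<P. (norm (m j))\<^sup>2) \<le> (real P - 1) * (\<Sum>j<P. real K * (\<Sum>k<K. a j k))"
    using P1 mS unfolding m_def by (intro mult_left_mono sum_mono) auto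
  have C: "(\<Sum>j<P. (\<integral>x. (norm (S j x))\<^sup>2 \<partial>\<Omega>)) \<le> (\<Sum>j<P. real K * (\<Sum>k<K. a j k) + (real K)\<^sup>2 * (M / real B))"
    using ES2 by (intro sum_mono) auto
  have "(real P - 1) * (\<Sum>j<P. real K * (\<Sum>k<K. a j k)) + (\<Sum>j<P. real K * (\<Sum>k<K. a j k) + (real K)\<^sup>2 * (M / real B))
     = real P * real K * (\<Sum>j<P. \<Sum>k<K. a j k) + real P * (real K)\<^sup>2 * (M / real B)"
    by (simp add: sum.distrib sum_distrib_left[symmetric] algebra_simps)
  with A B C show ?thesis by linarith
qed

lemma final:
  fixes \<delta> :: real
  assumes dpos: "0 < \<delta>" and dlt1: "\<delta> < 1"
    and step1: "1 \<ge> L\<^sup>2 * \<gamma>\<^sup>2 * (real K + 1) * (real K - 2) / 2 + L * \<gamma> * real K"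
    and step2: "1 - \<delta> \<ge> L\<^sup>2 * \<gamma>\<^sup>2"
  shows "(\<integral>x. F (kavg_step G \<gamma> B K P w x) \<partial>\<Omega>) - F w
           \<le> - ((real K - 1 + \<delta>) * \<gamma> / 2) * (norm (gradF w))\<^sup>2
              + L * \<gamma>\<^sup>2 * real K * M / (2 * real B)
                * (real K / real P + L * (2 * real K - 1) * (real K - 1) * \<gamma> / 6)"
proof -
  let ?h0 = "gradF w"
  define d where "d x = - (\<gamma> / real P) *\<^sub>R (\<Sum>j<P. S j x)" for x
  have sd: "sqint \<Omega> d" unfolding d_def[abs_def] using sqS
    by (intro sqint_scaleR[OF PO] sqint_sum[OF PO]) auto
  have Fx: "F (kavg_step G \<gamma> B K P w x) = F (w + d x)" for x unfolding kavg_step_eq d_def ..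
  have id: "integrable \<Omega> d" using sqint_integrable[OF PO sd] .
  have id2: "integrable \<Omega> (\<lambda>x. (norm (d x))\<^sup>2)" using sqint_sq_integrable[OF PO sd] .
  have ihd: "integrable \<Omega> (\<lambda>x. ?h0 \<bullet> d x)" using id by simp
  have iub: "integrable \<Omega> (\<lambda>x. F w + ?h0 \<bullet> d x + L / 2 * (norm (d x))\<^sup>2)"
    using ihd id2 ic[OF PO] by (intro Bochner_Integration.integrable_add integrable_mult_right) auto
  have mF: "(\<lambda>x. F (w + d x)) \<in> borel_measurable \<Omega>"
    using measurable_compose[OF _ F_meas, of "\<lambda>x. w + d x"] sqint_meas[OF PO sd] by simp
  have iF: "integrable \<Omega> (\<lambda>x. F (w + d x))"
  proof (rule Bochner_Integration.integrable_bound[where f="\<lambda>x. \<bar>F w\<bar> + \<bar>?h0 \<bullet> d x\<bar> + L / 2 * (norm (d x))\<^sup>2"])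
    show "integrable \<Omega> (\<lambda>x. \<bar>F w\<bar> + \<bar>?h0 \<bullet> d x\<bar> + L / 2 * (norm (d x))\<^sup>2)"
      using ihd id2 ic[OF PO] by (intro Bochner_Integration.integrable_add integrable_mult_right integrable_abs) auto
    show "(\<lambda>x. F (w + d x)) \<in> borel_measurable \<Omega>" by (rule mF)
    have "\<bar>F (w + d x)\<bar> \<le> \<bar>F w\<bar> + \<bar>?h0 \<bullet> d x\<bar> + L / 2 * (norm (d x))\<^sup>2" for x
      using descent[of "d x"] Lpos by (simp add: abs_le_iff) (smt (verit))
    then show "AE x in \<Omega>. norm (F (w + d x)) \<le> norm (\<bar>F w\<bar> + \<bar>?h0 \<bullet> d x\<bar> + L / 2 * (norm (d x))\<^sup>2)"
      using Lpos by (auto simp: abs_le_iff)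
  qed
  have "(\<integral>x. F (w + d x) \<partial>\<Omega>) \<le> (\<integral>x. F w + ?h0 \<bullet> d x + L / 2 * (norm (d x))\<^sup>2 \<partial>\<Omega>)"
    using iF iub descent(1) by (intro integral_mono) auto
  also have "\<dots> = F w + ?h0 \<bullet> integral\<^sup>L \<Omega> d + L / 2 * (\<integral>x. (norm (d x))\<^sup>2 \<partial>\<Omega>)"
  proof -
    have "(\<integral>x. F w + ?h0 \<bullet> d x + L / 2 * (norm (d x))\<^sup>2 \<partial>\<Omega>) = (\<integral>x. F w + ?h0 \<bullet> d x \<partial>\<Omega>) + (\<integral>x. L / 2 * (norm (d x))\<^sup>2 \<partial>\<Omega>)"
      using ihd id2 ic[OF PO] by (intro Bochner_Integration.integral_add Bochner_Integration.integrable_add integrable_mult_right) auto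
    also have "(\<integral>x. F w + ?h0 \<bullet> d x \<partial>\<Omega>) = (\<integral>x. F w \<partial>\<Omega>) + (\<integral>x. ?h0 \<bullet> d x \<partial>\<Omega>)"
      using ihd ic[OF PO] by (intro Bochner_Integration.integral_add) auto
    also have "(\<integral>x. F w \<partial>\<Omega>) = F w" using prob_space.prob_space[OF PO] by simp
    also have "(\<integral>x. ?h0 \<bullet> d x \<partial>\<Omega>) = ?h0 \<bullet> integral\<^sup>L \<Omega> d" using id by simp
    also have "(\<integral>x. L / 2 * (norm (d x))\<^sup>2 \<partial>\<Omega>) = L / 2 * (\<integral>x. (norm (d x))\<^sup>2 \<partial>\<Omega>)" by simp
    finally show ?thesis .
  qed
  finally have E1: "(\<integral>x. F (w + d x) \<partial>\<Omega>) - F w \<le> ?h0 \<bullet> integral\<^sup>L \<Omega> d + L / 2 * (\<integral>x. (norm (d x))\<^sup>2 \<partial>\<Omega>)"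
    by simp
  have iS: "j < P \<Longrightarrow> integrable \<Omega> (S j)" for j using sqint_integrable[OF PO sqS] .
  have "integral\<^sup>L \<Omega> d = - (\<gamma> / real P) *\<^sub>R (\<Sum>j<P. integral\<^sup>L \<Omega> (S j))"
    unfolding d_def using iS by (simp add: Bochner_Integration.integral_sum)
  then have "?h0 \<bullet> integral\<^sup>L \<Omega> d = - (\<gamma> / real P) * (\<Sum>j<P. \<Sum>k<K. ?h0 \<bullet> Eh j k)"
    using ES by (simp add: inner_sum_right)
  also have "\<dots> \<le> - (\<gamma> / real P) * (\<Sum>j<P. \<Sum>k<K. ((norm ?h0)\<^sup>2 + a j k - L\<^sup>2 * e j k) / 2)"
  proof -
    have "(\<Sum>j<P. \<Sum>k<K. ((norm ?h0)\<^sup>2 + a j k - L\<^sup>2 * e j k) / 2) \<le> (\<Sum>j<P. \<Sum>k<K. ?h0 \<bullet> Eh j k)"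
    proof (intro sum_mono)
      fix j k assume "j \<in> {..<P}" "k \<in> {..<K}"
      then have jk: "j < P" "k \<le> K" by auto
      have "?h0 \<bullet> Eh j k = (\<integral>x. ?h0 \<bullet> gradF (V j k x) \<partial>\<Omega>)"
        unfolding Eh_def using sqint_integrable[OF PO sqG[OF jk]] by simp
      then show "((norm ?h0)\<^sup>2 + a j k - L\<^sup>2 * e j k) / 2 \<le> ?h0 \<bullet> Eh j k" using inner_lb[OF jk] by simp
    qed
    then show ?thesis using gpos P1 by (intro mult_left_mono_neg) auto
  qed
  also have "- (\<gamma> / real P) * (\<Sum>j<P. \<Sum>k<K. ((norm ?h0)\<^sup>2 + a j k - L\<^sup>2 * e j k) / 2)
     = (1 / real P) * (\<Sum>j<P. - (\<gamma> / 2) * (\<Sum>k<K. (norm ?h0)\<^sup>2 + a j k - L\<^sup>2 * e j k))"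
  proof -
    have eq: "(\<Sum>j<P. \<Sum>k<K. ((norm ?h0)\<^sup>2 + a j k - L\<^sup>2 * e j k) / 2) = (\<Sum>j<P. \<Sum>k<K. ((norm ?h0)\<^sup>2 + a j k - L\<^sup>2 * e j k)) / 2"
      by (simp add: sum_divide_distrib)
    have eq2: "(\<Sum>j<P. - (\<gamma> / 2) * (\<Sum>k<K. (norm ?h0)\<^sup>2 + a j k - L\<^sup>2 * e j k)) = - (\<gamma> / 2) * (\<Sum>j<P. \<Sum>k<K. ((norm ?h0)\<^sup>2 + a j k - L\<^sup>2 * e j k))"
      by (simp only: sum_distrib_left)
    show ?thesis unfolding eq eq2 by simp
  qed
  finally have T1: "?h0 \<bullet> integral\<^sup>L \<Omega> d \<le> (1 / real P) * (\<Sum>j<P. - (\<gamma> / 2) * (\<Sum>k<K. (norm ?h0)\<^sup>2 + a j k - L\<^sup>2 * e j k))" .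
  have "(\<integral>x. (norm (d x))\<^sup>2 \<partial>\<Omega>) = (\<gamma> / real P)\<^sup>2 * (\<integral>x. (norm (\<Sum>j<P. S j x))\<^sup>2 \<partial>\<Omega>)"
  proof -
    have pw: "(norm (d x))\<^sup>2 = (\<gamma> / real P)\<^sup>2 * (norm (\<Sum>j<P. S j x))\<^sup>2" for x
      unfolding d_def norm_scaleR by (simp add: power_mult_distrib power_divide)
    show ?thesis unfolding pw by simp
  qed
  also have "\<dots> \<le> (\<gamma> / real P)\<^sup>2 * (real P * real K * (\<Sum>j<P. \<Sum>k<K. a j k) + real P * (real K)\<^sup>2 * (M / real B))"
    by (intro mult_left_mono Ed2) auto
  finally have "L / 2 * (\<integral>x. (norm (d x))\<^sup>2 \<partial>\<Omega>) \<le> L / 2 * ((\<gamma> / real P)\<^sup>2 * (real P * real K * (\<Sum>j<P. \<Sum>k<K. a j k) + real P * (real K)\<^sup>2 * (M / real B)))"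
    using Lpos by (intro mult_left_mono) auto
  also have "\<dots> = (1 / real P) * (\<Sum>j<P. (L * \<gamma>\<^sup>2 * real K / 2) * (\<Sum>k<K. a j k)) + L * \<gamma>\<^sup>2 * real K * M / (2 * real B) * (real K / real P)"
  proof -
    have sd: "(\<Sum>j<P. (L * \<gamma>\<^sup>2 * real K / 2) * (\<Sum>k<K. a j k)) = (L * \<gamma>\<^sup>2 * real K / 2) * (\<Sum>j<P. \<Sum>k<K. a j k)"
      by (simp only: sum_distrib_left)
    show ?thesis unfolding sd using P1 B1 by (simp add: field_simps power2_eq_square)
  qed
  finally have T2: "L / 2 * (\<integral>x. (norm (d x))\<^sup>2 \<partial>\<Omega>) \<le> (1 / real P) * (\<Sum>j<P. (L * \<gamma>\<^sup>2 * real K / 2) * (\<Sum>k<K. a j k)) + L * \<gamma>\<^sup>2 * real K * M / (2 * real B) * (real K / real P)" .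
  define R where "R = - ((real K - 1 + \<delta>) * \<gamma> / 2) * (norm ?h0)\<^sup>2 + (L\<^sup>2 * \<gamma>^3 * (M / real B) / 2) * (\<Sum>k<K. (real k)\<^sup>2)"
  have perj: "- (\<gamma> / 2) * (\<Sum>k<K. (norm ?h0)\<^sup>2 + a j k - L\<^sup>2 * e j k) + (L * \<gamma>\<^sup>2 * real K / 2) * (\<Sum>k<K. a j k) \<le> R"
    if j: "j < P" for j
    unfolding R_def
  proof (rule alg[OF K1 _ _ _ gpos Lpos _ step1 step2])
    show "k < K \<Longrightarrow> 0 \<le> a j k" for k unfolding a_def by (intro integral_nonneg_AE) auto
    show "a j 0 = (norm ?h0)\<^sup>2" unfolding a_def V0 using prob_space.prob_space[OF PO] by simp
    show "0 \<le> M / real B" using Mnn B1 by simp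
    show "e j k \<le> \<gamma>\<^sup>2 * real k * (\<Sum>k'<k. a j k' + M / real B)" if k: "k < K" for k
    proof -
      have "e j k \<le> \<gamma>\<^sup>2 * real k * (\<Sum>k'<k. q j k')" using e_bound[OF j] k by simp
      also have "\<dots> \<le> \<gamma>\<^sup>2 * real k * (\<Sum>k'<k. a j k' + M / real B)"
        using qa[OF j] k by (intro mult_left_mono sum_mono) auto
      finally show ?thesis .
    qed
  qed
  have "(\<integral>x. F (w + d x) \<partial>\<Omega>) - F w \<le> (1 / real P) * (\<Sum>j<P. - (\<gamma> / 2) * (\<Sum>k<K. (norm ?h0)\<^sup>2 + a j k - L\<^sup>2 * e j k) + (L * \<gamma>\<^sup>2 * real K / 2) * (\<Sum>k<K. a j k))
      + L * \<gamma>\<^sup>2 * real K * M / (2 * real B) * (real K / real P)"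
  proof -
    have split: "(1 / real P) * (\<Sum>j<P. - (\<gamma> / 2) * (\<Sum>k<K. (norm ?h0)\<^sup>2 + a j k - L\<^sup>2 * e j k) + (L * \<gamma>\<^sup>2 * real K / 2) * (\<Sum>k<K. a j k))
      = (1 / real P) * (\<Sum>j<P. - (\<gamma> / 2) * (\<Sum>k<K. (norm ?h0)\<^sup>2 + a j k - L\<^sup>2 * e j k)) + (1 / real P) * (\<Sum>j<P. (L * \<gamma>\<^sup>2 * real K / 2) * (\<Sum>k<K. a j k))"
      by (simp only: sum.distrib distrib_left)
    show ?thesis unfolding split using E1 T1 T2 by linarith
  qed
  moreover have "(1 / real P) * (\<Sum>j<P. - (\<gamma> / 2) * (\<Sum>k<K. (norm ?h0)\<^sup>2 + a j k - L\<^sup>2 * e j k) + (L * \<gamma>\<^sup>2 * real K / 2) * (\<Sum>k<K. a j k)) \<le> R"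
  proof -
    have "(\<Sum>j<P. - (\<gamma> / 2) * (\<Sum>k<K. (norm ?h0)\<^sup>2 + a j k - L\<^sup>2 * e j k) + (L * \<gamma>\<^sup>2 * real K / 2) * (\<Sum>k<K. a j k)) \<le> (\<Sum>j<P. R)"
      using perj by (intro sum_mono) auto
    also have "(\<Sum>j<P. R) = real P * R" by simp
    finally have "(1 / real P) * (\<Sum>j<P. - (\<gamma> / 2) * (\<Sum>k<K. (norm ?h0)\<^sup>2 + a j k - L\<^sup>2 * e j k) + (L * \<gamma>\<^sup>2 * real K / 2) * (\<Sum>k<K. a j k)) \<le> (1 / real P) * (real P * R)"
      by (intro mult_left_mono) auto
    then show ?thesis using P1 by simp
  qed
  ultimately have "(\<integral>x. F (w + d x) \<partial>\<Omega>) - F w \<le> R + L * \<gamma>\<^sup>2 * real K * M / (2 * real B) * (real K / real P)"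
    by linarith
  also have "\<dots> = - ((real K - 1 + \<delta>) * \<gamma> / 2) * (norm (gradF w))\<^sup>2
              + L * \<gamma>\<^sup>2 * real K * M / (2 * real B)
                * (real K / real P + L * (2 * real K - 1) * (real K - 1) * \<gamma> / 6)"
  proof -
    have sk: "(\<Sum>k<K. (real k)\<^sup>2) = (real K - 1) * real K * (2 * real K - 1) / 6" using sq_sum_real[of K] by simp
    show ?thesis unfolding R_def sk using B1 by (simp add: field_simps power2_eq_square power3_eq_cube)
  qed
  finally show ?thesis unfolding Fx .
qed

end



theorem mainTheorem6:
  fixes F :: "'a::euclidean_space \<Rightarrow> real" and gradF :: "'a \<Rightarrow> 'a"
    and D :: "'b measure" and G :: "'a \<Rightarrow> 'b \<Rightarrow> 'a"
    and L M \<gamma> \<delta> :: real and P K B :: nat and w :: 'a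
  assumes probD: "prob_space D"
    and deriv: "\<And>v. (F has_derivative (\<lambda>h. gradF v \<bullet> h)) (at v)"
    and Lpos: "L > 0"
    and lip: "\<And>v v'. norm (gradF v - gradF v') \<le> L * norm (v - v')"
    and meas: "(\<lambda>(v, \<xi>). G v \<xi>) \<in> borel_measurable (borel \<Otimes>\<^sub>M D)"
    and int1: "\<And>v. integrable D (G v)"
    and unbiased: "\<And>v. (\<integral>\<xi>. G v \<xi> \<partial>D) = gradF v"
    and int2: "\<And>v. integrable D (\<lambda>\<xi>. (norm (G v \<xi>))\<^sup>2)"
    and var: "\<And>v. (\<integral>\<xi>. (norm (G v \<xi>))\<^sup>2 \<partial>D) - (norm (\<integral>\<xi>. G v \<xi> \<partial>D))\<^sup>2 \<le> M"
    and Mnn: "M \<ge> 0"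
    and P1: "P \<ge> 1" and K1: "K \<ge> 1" and B1: "B \<ge> 1"
    and gpos: "\<gamma> > 0"
    and dpos: "0 < \<delta>" and dlt1: "\<delta> < 1"
    and step1: "1 \<ge> L\<^sup>2 * \<gamma>\<^sup>2 * (real K + 1) * (real K - 2) / 2 + L * \<gamma> * real K"
    and step2: "1 - \<delta> \<ge> L\<^sup>2 * \<gamma>\<^sup>2"
  shows "(\<integral>x. F (kavg_step G \<gamma> B K P w x) \<partial>(PiM (kavg_index P K B) (\<lambda>_. D))) - F w
           \<le> - ((real K - 1 + \<delta>) * \<gamma> / 2) * (norm (gradF w))\<^sup>2
              + L * \<gamma>\<^sup>2 * real K * M / (2 * real B)
                * (real K / real P + L * (2 * real K - 1) * (real K - 1) * \<gamma> / 6)"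
  proof -
  interpret kavg2 F gradF D G L M \<gamma> P K B w
    unfolding kavg2_def kavg2_axioms_def kavg_def
    using probD deriv Lpos lip meas int1 unbiased int2 var B1 Mnn P1 K1 gpos by blast
  show ?thesis by (rule final[OF dpos dlt1 step1 step2])
qed


end
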